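(* Let $n \geq 2$, $m$, $\delta$ be integers with $\delta \geq n$ and $m \leq 2\delta-1$. Let $G$ be a bipartite graph with bipartition $(X,Y)$, where $|X| = n$, $|Y| = m$, and every $x \in X$ has degree at least $\delta$. If $G$ does not contain a cycle of length $2n$, then either $G$ is isomorphic to $G_1(n)$, or $G$ is isomorphic to $G_2(a,b)$ for some positive integers $a \geq b$ with $a+b=n$ (where $G_1(n)$ and $G_2(a,b)$ are the graphs defined in the context, with parameter $\delta$).
   Context: $G_1(n)$ (defined when $\delta = n$): take a copy of the complete bipartite graph $K_{\delta,\delta-1}$ with parts $X$ of size $\delta$ and $Y_0$ of size $\delta-1$, and for every vertex of $X$ add a new private neighbor of degree 1; the resulting graph has parts $X$ (size $n=\delta$) and $Y$ of size $2\delta-1$. $G_2(a,b)$ (for positive integers $a\ge b$ with $a+b=n$): take a copy $H_1$ of $K_{a,\delta}$ and a copy $H_2$ of $K_{b,\delta}$ and identify one vertex of $H_1$ in its part of size $\delta$ with one vertex of $H_2$ in its part of size $\delta$; here $X$ is the union of the parts of sizes $a$ and $b$ (so $|X|=n$) and $Y$ has size $2\delta-1$. *)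

theory Defs
  imports Main
begin

definition bipartite_graph :: "'a set \<Rightarrow> 'a set \<Rightarrow> 'a set set \<Rightarrow> bool" where
  "bipartite_graph X Y E \<longleftrightarrow> finite X \<and> finite Y \<and> X \<inter> Y = {} \<and>
     (\<forall>e\<in>E. \<exists>x\<in>X. \<exists>y\<in>Y. e = {x, y})"

definition degree :: "'a set set \<Rightarrow> 'a \<Rightarrow> nat" where
  "degree E v = card {u. {v, u} \<in> E}"

definition has_cycle_of_length :: "'a set \<Rightarrow> 'a set set \<Rightarrow> nat \<Rightarrow> bool" where
  "has_cycle_of_length V E k \<longleftrightarrow> k \<ge> 3 \<and> (\<exists>vs. length vs = k \<and> distinct vs \<and> set vs \<subseteq> V \<and>
     (\<forall>i<k. {vs ! i, vs ! ((i + 1) mod k)} \<in> E))"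

definition graph_iso :: "'a set \<Rightarrow> 'a set set \<Rightarrow> 'b set \<Rightarrow> 'b set set \<Rightarrow> bool" where
  "graph_iso V E V' E' \<longleftrightarrow> (\<exists>f. bij_betw f V V' \<and>
     (\<forall>u\<in>V. \<forall>v\<in>V. {u, v} \<in> E \<longleftrightarrow> {f u, f v} \<in> E'))"

text \<open>G_1 with parameter d (= delta): X = {(0,i) | i<d}, Y_0 = {(1,j) | j<d-1},
  private pendant neighbours (2,i) of (0,i).\<close>
definition G1_X :: "nat \<Rightarrow> (nat \<times> nat) set" where
  "G1_X d = {(0, i) | i. i < d}"
definition G1_Y :: "nat \<Rightarrow> (nat \<times> nat) set" where
  "G1_Y d = {(1, j) | j. j < d - 1} \<union> {(2, i) | i. i < d}"
definition G1_E :: "nat \<Rightarrow> (nat \<times> nat) set set" where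
  "G1_E d = {{(0, i), (1, j)} | i j. i < d \<and> j < d - 1} \<union> {{(0, i), (2, i)} | i. i < d}"

text \<open>G_2(a,b) with parameter d: H_1 = K_{a,d} with parts {(0,i) | i<a} and {(1,j) | j<d};
  H_2 = K_{b,d} with parts {(2,i) | i<b} and {(1,0)} \<union> {(3,j) | 1 \<le> j < d}, so (1,0) is the
  identified vertex.\<close>
definition G2_X :: "nat \<Rightarrow> nat \<Rightarrow> (nat \<times> nat) set" where
  "G2_X a b = {(0, i) | i. i < a} \<union> {(2, i) | i. i < b}"
definition G2_Y :: "nat \<Rightarrow> (nat \<times> nat) set" where
  "G2_Y d = {(1, j) | j. j < d} \<union> {(3, j) | j. 1 \<le> j \<and> j < d}"
definition G2_E :: "nat \<Rightarrow> nat \<Rightarrow> nat \<Rightarrow> (nat \<times> nat) set set" where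
  "G2_E a b d = {{(0, i), (1, j)} | i j. i < a \<and> j < d}
     \<union> {{(2, i), (1, 0)} | i. i < b}
     \<union> {{(2, i), (3, j)} | i j. i < b \<and> 1 \<le> j \<and> j < d}"

end

theory Submission
  imports Defs
begin
definition xpath :: "('a \<Rightarrow> 'a set) \<Rightarrow> 'a list \<Rightarrow> 'a list \<Rightarrow> bool" where
  "xpath N xs ys \<longleftrightarrow> length xs = Suc (length ys) \<and>
     (\<forall>i<length ys. ys!i \<in> N (xs!i) \<and> ys!i \<in> N (xs!Suc i))"

definition cyc :: "('a \<Rightarrow> 'a set) \<Rightarrow> 'a list \<Rightarrow> 'a list \<Rightarrow> bool" where
  "cyc N xs zs \<longleftrightarrow> length zs = length xs \<and> 2 \<le> length xs \<and>
     (\<forall>i<length xs. zs!i \<in> N (xs!i) \<and> zs!i \<in> N (xs!(Suc i mod length xs)))"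

lemma xpath_single[simp]: "xpath N [a] []"
  by (simp add: xpath_def)

lemma xpath_Cons2: "xpath N (a # b # xs) (y # ys) \<longleftrightarrow> y \<in> N a \<and> y \<in> N b \<and> xpath N (b # xs) ys"
  unfolding xpath_def
  by (auto simp: nth_Cons split: nat.splits)

lemma xpath_ne: "xpath N xs ys \<Longrightarrow> xs \<noteq> []"
  by (auto simp: xpath_def)

lemma xpath_append:
  assumes "xpath N xs1 ys1" "xpath N xs2 ys2" "y \<in> N (last xs1)" "y \<in> N (hd xs2)"
  shows "xpath N (xs1 @ xs2) (ys1 @ y # ys2)"
proof -
  have l1: "length xs1 = Suc (length ys1)" and l2: "length xs2 = Suc (length ys2)"
    using assms by (auto simp: xpath_def)
  have lst: "last xs1 = xs1 ! length ys1" using l1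
    by (metis diff_Suc_1 last_conv_nth list.size(3) nat.distinct(1))
  have hd2: "hd xs2 = xs2 ! 0" using l2 by (metis hd_conv_nth list.size(3) nat.distinct(1))
  show ?thesis unfolding xpath_def
  proof (rule conjI)
    show "length (xs1 @ xs2) = Suc (length (ys1 @ y # ys2))" using l1 l2 by simp
  next
    show "\<forall>i<length (ys1 @ y # ys2). (ys1 @ y # ys2) ! i \<in> N ((xs1 @ xs2) ! i) \<and> (ys1 @ y # ys2) ! i \<in> N ((xs1 @ xs2) ! Suc i)"
    proof (intro allI impI)
    fix i assume i: "i < length (ys1 @ y # ys2)"
    consider (a) "i < length ys1" | (b) "i = length ys1" | (c) "i > length ys1" by linarith
    then show "(ys1 @ y # ys2) ! i \<in> N ((xs1 @ xs2) ! i) \<and> (ys1 @ y # ys2) ! i \<in> N ((xs1 @ xs2) ! Suc i)"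
    proof cases
      case a then show ?thesis using assms(1) l1 by (auto simp: xpath_def nth_append)
    next
      case b then show ?thesis using assms(3,4) l1 lst hd2 by (auto simp: nth_append)
    next
      case c
      then obtain t where t: "i = Suc (length ys1) + t" by (metis less_iff_Suc_add add_Suc)
      have "t < length ys2" using i t by simp
      then show ?thesis using assms(2) l1 t by (auto simp: xpath_def nth_append)
    qed
  qed
  qed
qed

lemma xpath_rev:
  assumes "xpath N xs ys" shows "xpath N (rev xs) (rev ys)"
  unfolding xpath_def
proof (rule conjI)
  show "length (rev xs) = Suc (length (rev ys))" using assms by (simp add: xpath_def)
next
  show "\<forall>i<length (rev ys). rev ys ! i \<in> N (rev xs ! i) \<and> rev ys ! i \<in> N (rev xs ! Suc i)"
  proof (intro allI impI)
  fix i assume i: "i < length (rev ys)"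
  define L where "L = length ys"
  have lx: "length xs = Suc L" using assms by (simp add: xpath_def L_def)
  define j where "j = L - Suc i"
  have j: "j < L" using i by (simp add: j_def L_def)
  have "ys ! j \<in> N (xs ! j) \<and> ys ! j \<in> N (xs ! Suc j)" using assms j by (simp add: xpath_def L_def)
  moreover have "rev ys ! i = ys ! j" using i by (simp add: rev_nth j_def L_def)
  moreover have "rev xs ! i = xs ! Suc j" using i lx by (simp add: rev_nth j_def L_def Suc_diff_Suc)
  moreover have "rev xs ! Suc i = xs ! j" using i lx by (simp add: rev_nth j_def L_def)
  ultimately show "rev ys ! i \<in> N (rev xs ! i) \<and> rev ys ! i \<in> N (rev xs ! Suc i)" by auto
  qed
qed

lemma xpath_split:
  assumes "xpath N xs ys" "j < length ys"
  shows "xpath N (take (Suc j) xs) (take j ys)" "xpath N (drop (Suc j) xs) (drop (Suc j) ys)"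
  using assms by (auto simp: xpath_def)

lemma cyc_of_path:
  assumes "xpath N xs ys" "z \<in> N (last xs)" "z \<in> N (hd xs)" "2 \<le> length xs"
  shows "cyc N xs (ys @ [z])"
proof -
  have l: "length xs = Suc (length ys)" using assms by (simp add: xpath_def)
  have "\<forall>i<length xs. (ys @ [z]) ! i \<in> N (xs ! i) \<and> (ys @ [z]) ! i \<in> N (xs ! (Suc i mod length xs))"
  proof (intro allI impI)
  fix i assume i: "i < length xs"
  show "(ys @ [z]) ! i \<in> N (xs ! i) \<and> (ys @ [z]) ! i \<in> N (xs ! (Suc i mod length xs))"
  proof (cases "i < length ys")
    case True
    then show ?thesis using assms(1) l by (auto simp: xpath_def nth_append)
  next
    case False
    then have "i = length ys" using i l by simp
    moreover have "last xs = xs ! length ys" using l by (metis last_conv_nth diff_Suc_1 list.size(3) nat.distinct(1))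
    moreover have "hd xs = xs ! 0" using l by (metis hd_conv_nth list.size(3) nat.distinct(1))
    ultimately show ?thesis using assms l by (simp add: nth_append)
  qed
  qed
  then show ?thesis using l assms(4) unfolding cyc_def by simp
qed

lemma path_of_cyc:
  assumes "cyc N xs zs"
  shows "xpath N xs (butlast zs)" "last zs \<in> N (last xs)" "last zs \<in> N (hd xs)"
proof -
  have l: "length zs = length xs" "2 \<le> length xs" using assms by (auto simp: cyc_def)
  show "xpath N xs (butlast zs)" unfolding xpath_def
  proof (rule conjI)
    show "length xs = Suc (length (butlast zs))" using l by simp
    show "\<forall>i<length (butlast zs). butlast zs ! i \<in> N (xs ! i) \<and> butlast zs ! i \<in> N (xs ! Suc i)"
    proof (intro allI impI)
    fix i assume i: "i < length (butlast zs)"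
    then have a: "i < length xs" "Suc i < length xs" using l by auto
    then have "zs ! i \<in> N (xs ! i) \<and> zs ! i \<in> N (xs ! (Suc i mod length xs))" using assms unfolding cyc_def by blast
    then show "butlast zs ! i \<in> N (xs ! i) \<and> butlast zs ! i \<in> N (xs ! Suc i)"
      using a i by (simp add: nth_butlast)
    qed
  qed
  have k: "length xs - 1 < length xs" using l by simp
  have ne: "xs \<noteq> []" "zs \<noteq> []" using l by (cases xs; auto)+
  have "last zs = zs ! (length xs - 1)" using l ne by (simp add: last_conv_nth)
  moreover have "last xs = xs ! (length xs - 1)" using l ne by (simp add: last_conv_nth)
  moreover have "hd xs = xs ! (Suc (length xs - 1) mod length xs)"
  proof -
    have "Suc (length xs - 1) = length xs" using l by linarith
    then show ?thesis using ne by (simp add: hd_conv_nth)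
  qed
  ultimately show "last zs \<in> N (last xs)" "last zs \<in> N (hd xs)"
    using assms k unfolding cyc_def by metis+
qed

lemma cyc_rotate:
  assumes "cyc N xs zs" shows "cyc N (rotate r xs) (rotate r zs)"
proof -
  have l: "length zs = length xs" "2 \<le> length xs" using assms by (auto simp: cyc_def)
  have "\<forall>i<length (rotate r xs). rotate r zs ! i \<in> N (rotate r xs ! i) \<and> rotate r zs ! i \<in> N (rotate r xs ! (Suc i mod length (rotate r xs)))"
  proof (intro allI impI)
  fix i assume i: "i < length (rotate r xs)"
  let ?k = "length xs"
  have i': "i < ?k" using i by simp
  have "rotate r zs ! i = zs ! ((r + i) mod ?k)" using i' l by (simp add: nth_rotate)
  moreover have "rotate r xs ! i = xs ! ((r + i) mod ?k)" using i' by (simp add: nth_rotate)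
  moreover have "rotate r xs ! (Suc i mod ?k) = xs ! (Suc ((r + i) mod ?k) mod ?k)"
  proof -
    have "Suc i mod ?k < ?k" using l by (intro mod_less_divisor) linarith
    have ne: "xs \<noteq> []" using l by (cases xs; auto)
    then have "rotate r xs ! (Suc i mod ?k) = xs ! ((r + Suc i mod ?k) mod ?k)" using \<open>Suc i mod ?k < ?k\<close> by (simp add: nth_rotate)
    also have "(r + Suc i mod ?k) mod ?k = Suc ((r + i) mod ?k) mod ?k"
      by (metis add_Suc_right mod_Suc_eq mod_add_right_eq)
    finally show ?thesis .
  qed
  moreover have "(r + i) mod ?k < ?k" using l by (intro mod_less_divisor) linarith
  ultimately show "rotate r zs ! i \<in> N (rotate r xs ! i) \<and> rotate r zs ! i \<in> N (rotate r xs ! (Suc i mod length (rotate r xs)))"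
    using assms by (simp add: cyc_def)
  qed
  then show ?thesis using l unfolding cyc_def by simp
qed

declare rotate_Suc[simp del]

lemma set_butlast_distinct: "distinct xs \<Longrightarrow> xs \<noteq> [] \<Longrightarrow> set (butlast xs) = set xs - {last xs}"
  by (metis Diff_insert_absorb append_butlast_last_id distinct_append list.set(1) list.simps(15)
      not_distinct_conv_prefix set_append Un_insert_right sup_bot.right_neutral distinct_butlast
      in_set_butlastD)

lemma gap1:
  assumes "cyc N xs zs" "distinct zs" "i < length xs"
  shows "xpath N (rotate (Suc i) xs) (butlast (rotate (Suc i) zs))"
    "last (rotate (Suc i) zs) = zs!i" "last (rotate (Suc i) xs) = xs!i"
    "hd (rotate (Suc i) xs) = xs!(Suc i mod length xs)"
    "set (butlast (rotate (Suc i) zs)) = set zs - {zs!i}"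
    "distinct (butlast (rotate (Suc i) zs))"
proof -
  let ?k = "length xs"
  have l: "length zs = ?k" "2 \<le> ?k" using assms by (auto simp: cyc_def)
  have ne: "xs \<noteq> []" "zs \<noteq> []" using l by (cases xs; auto)+
  show "xpath N (rotate (Suc i) xs) (butlast (rotate (Suc i) zs))"
    using path_of_cyc(1)[OF cyc_rotate[OF assms(1)]] .
  have e: "(Suc i + (?k - 1)) mod ?k = i"
  proof -
    have "Suc i + (?k - 1) = i + ?k" using l by simp
    then show ?thesis using assms(3) by simp
  qed
  have "last (rotate (Suc i) zs) = rotate (Suc i) zs ! (?k - 1)"
    using ne l by (simp add: last_conv_nth)
  also have "\<dots> = zs ! ((Suc i + (?k - 1)) mod ?k)" using l ne by (simp add: nth_rotate)
  finally show lz: "last (rotate (Suc i) zs) = zs!i" using e by simp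
  have "last (rotate (Suc i) xs) = rotate (Suc i) xs ! (?k - 1)"
    using ne l by (simp add: last_conv_nth)
  also have "\<dots> = xs ! ((Suc i + (?k - 1)) mod ?k)" using l ne by (simp add: nth_rotate)
  finally show "last (rotate (Suc i) xs) = xs!i" using e by simp
  have "hd (rotate (Suc i) xs) = rotate (Suc i) xs ! 0" using ne by (simp add: hd_conv_nth)
  also have "\<dots> = xs ! (Suc i mod ?k)" using ne by (simp add: nth_rotate)
  finally show "hd (rotate (Suc i) xs) = xs!(Suc i mod length xs)" .
  have d: "distinct (rotate (Suc i) zs)" using assms(2) by simp
  have ne2: "rotate (Suc i) zs \<noteq> []" using ne by simp
  show "set (butlast (rotate (Suc i) zs)) = set zs - {zs!i}"
    using set_butlast_distinct[OF d ne2] lz by simp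
  show "distinct (butlast (rotate (Suc i) zs))" using d by (simp add: distinct_butlast)
qed

lemma gap2:
  assumes "cyc N xs zs" "distinct zs" "distinct xs" "i < length xs" "j < length xs" "i \<noteq> j"
  shows "\<exists>P1 Y1 P2 Y2. xpath N P1 Y1 \<and> xpath N P2 Y2 \<and> hd P1 = xs!(Suc i mod length xs) \<and>
     last P1 = xs!j \<and> hd P2 = xs!(Suc j mod length xs) \<and> last P2 = xs!i \<and>
     distinct (P1 @ P2) \<and> set (P1 @ P2) = set xs \<and> distinct (Y1 @ Y2) \<and>
     set (Y1 @ Y2) = set zs - {zs!i, zs!j}"
proof -
  let ?k = "length xs"
  have l: "length zs = ?k" "2 \<le> ?k" using assms by (auto simp: cyc_def)
  have ne: "xs \<noteq> []" "zs \<noteq> []" using l by (cases xs; auto)+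
  define xs' where "xs' = rotate (Suc i) xs"
  define ys' where "ys' = butlast (rotate (Suc i) zs)"
  note g = gap1[OF assms(1,2,4), folded xs'_def ys'_def]
  have lx': "length xs' = ?k" by (simp add: xs'_def)
  have ly': "length ys' = ?k - 1" using l by (simp add: ys'_def)
  have "zs!j \<noteq> zs!i" using assms l by (simp add: nth_eq_iff_index_eq)
  then have "zs!j \<in> set ys'" using g(5) assms(5) l by (simp)
  then obtain t where t: "t < length ys'" "ys'!t = zs!j" by (auto simp: in_set_conv_nth)
  have "ys'!t = zs!((Suc i + t) mod ?k)" using t ly' l ne
    by (simp add: ys'_def nth_butlast nth_rotate)
  then have tj: "(Suc i + t) mod ?k = j" using t assms l
    by (metis mod_less_divisor nth_eq_iff_index_eq ne(1) length_greater_0_conv)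
  have xt: "xs'!t = xs!j" using tj t ly' l ne by (simp add: xs'_def nth_rotate)
  have "Suc t < ?k" using t ly' l by simp
  then have xt1: "xs'!Suc t = xs!(Suc j mod ?k)" using tj
    by (simp add: xs'_def nth_rotate) (metis mod_Suc_eq)
  define P1 where "P1 = take (Suc t) xs'"
  define P2 where "P2 = drop (Suc t) xs'"
  define Y1 where "Y1 = take t ys'"
  define Y2 where "Y2 = drop (Suc t) ys'"
  have p1: "xpath N P1 Y1" "xpath N P2 Y2" using xpath_split[OF g(1)[folded ys'_def] t(1)]
    by (simp_all add: P1_def Y1_def P2_def Y2_def xs'_def)
  have h1: "hd P1 = xs!(Suc i mod ?k)" using g(4) by (simp add: P1_def xs'_def)
  have h2: "last P1 = xs!j" using xt \<open>Suc t < ?k\<close> lx'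
    by (simp add: P1_def last_conv_nth take_Suc_conv_app_nth)
  have h3: "hd P2 = xs!(Suc j mod ?k)" using xt1 \<open>Suc t < ?k\<close> lx'
    by (simp add: P2_def hd_drop_conv_nth)
  have h4: "last P2 = xs!i" using \<open>Suc t < ?k\<close> lx' g(3) by (simp add: P2_def last_drop xs'_def)
  have pp: "P1 @ P2 = xs'" by (simp add: P1_def P2_def)
  have yy: "ys' = Y1 @ ys'!t # Y2" using t(1) unfolding Y1_def Y2_def by (rule id_take_nth_drop)
  have dy: "distinct ys'" by (rule g(6)[folded ys'_def])
  have h5: "distinct (P1 @ P2)" using pp assms(3) by (simp add: xs'_def)
  have h6: "set (P1 @ P2) = set xs" using pp by (simp add: xs'_def)
  have h7: "distinct (Y1 @ Y2)"
  proof -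
    have "distinct (Y1 @ ys'!t # Y2)" using dy yy by metis
    then show ?thesis by auto
  qed
  have h8: "set (Y1 @ Y2) = set zs - {zs!i, zs!j}"
  proof -
    have "set ys' = insert (ys'!t) (set (Y1 @ Y2))" using yy by (metis set_append Un_insert_right list.simps(15))
    moreover have "ys'!t \<notin> set (Y1 @ Y2)"
    proof -
      have "distinct (Y1 @ ys'!t # Y2)" using dy yy by metis
      then show ?thesis by auto
    qed
    ultimately have "set (Y1 @ Y2) = set ys' - {ys'!t}" by auto
    then show ?thesis using g(5) t(2) by (auto simp: ys'_def)
  qed
  show ?thesis
    apply (rule exI[of _ P1], rule exI[of _ Y1], rule exI[of _ P2], rule exI[of _ Y2])
    using p1 h1 h2 h3 h4 h5 h6 h7 h8 by blast
qed

lemma cyc_to_hcl: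
  assumes "cyc (\<lambda>v. {u. {v,u} \<in> E}) xs zs" "distinct xs" "distinct zs" "set xs \<inter> set zs = {}"
    "set xs \<union> set zs \<subseteq> V"
  shows "has_cycle_of_length V E (2 * length xs)"
proof -
  let ?k = "length xs"
  have l: "length zs = ?k" "2 \<le> ?k" using assms by (auto simp: cyc_def)
  define vs where "vs = map (\<lambda>j. if even j then xs!(j div 2) else zs!(j div 2)) [0..<2*?k]"
  have lv: "length vs = 2 * ?k" by (simp add: vs_def)
  have nv: "\<And>j. j < 2 * ?k \<Longrightarrow> vs!j = (if even j then xs!(j div 2) else zs!(j div 2))"
    by (simp add: vs_def)
  have dv: "distinct vs"
    unfolding distinct_conv_nth
  proof (intro allI impI)
    fix a b assume ab: "a < length vs" "b < length vs" "a \<noteq> b"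
    have a2: "a div 2 < ?k" "b div 2 < ?k" using ab lv by auto
    show "vs!a \<noteq> vs!b"
    proof (cases "even a"; cases "even b")
      assume "even a" "even b"
      then have "a div 2 \<noteq> b div 2" using ab by (metis dvd_mult_div_cancel)
      then show ?thesis using \<open>even a\<close> \<open>even b\<close> nv ab lv a2 assms(2) by (simp add: nth_eq_iff_index_eq)
    next
      assume "even a" "odd b"
      have m: "xs!(a div 2) \<in> set xs" "zs!(b div 2) \<in> set zs" using a2 l by auto
      have "vs!a = xs!(a div 2)" "vs!b = zs!(b div 2)" using \<open>even a\<close> \<open>odd b\<close> nv ab lv by auto
      then show ?thesis using m assms(4) by auto
    next
      assume "odd a" "even b"
      have m: "zs!(a div 2) \<in> set zs" "xs!(b div 2) \<in> set xs" using a2 l by auto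
      have "vs!a = zs!(a div 2)" "vs!b = xs!(b div 2)" using \<open>odd a\<close> \<open>even b\<close> nv ab lv by auto
      then show ?thesis using m assms(4) by auto
    next
      assume "odd a" "odd b"
      then have "a div 2 \<noteq> b div 2" using ab by (metis odd_two_times_div_two_succ)
      then show ?thesis using \<open>odd a\<close> \<open>odd b\<close> nv ab lv a2 l assms(3) by (simp add: nth_eq_iff_index_eq)
    qed
  qed
  have sv: "set vs \<subseteq> V"
  proof
    fix v assume "v \<in> set vs"
    then obtain j where j: "j < 2 * ?k" "v = vs!j" by (auto simp: in_set_conv_nth lv)
    then have "j div 2 < ?k" by auto
    then show "v \<in> V" using j nv assms(5) l by (auto split: if_splits)
  qed
  have ev: "\<forall>i<2*?k. {vs ! i, vs ! ((i + 1) mod (2*?k))} \<in> E"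
  proof (intro allI impI)
    fix i assume i: "i < 2 * ?k"
    have cy: "\<And>t. t < ?k \<Longrightarrow> {xs!t, zs!t} \<in> E \<and> {xs!(Suc t mod ?k), zs!t} \<in> E"
      using assms(1) by (auto simp: cyc_def)
    show "{vs ! i, vs ! ((i + 1) mod (2*?k))} \<in> E"
    proof (cases "even i")
      case True
      then obtain t where t: "i = 2 * t" by auto
      have "i + 1 < 2 * ?k" using i t by auto
      then have "vs ! ((i + 1) mod (2*?k)) = zs ! t" using t nv by simp
      moreover have "vs ! i = xs ! t" using t nv i by simp
      ultimately show ?thesis using cy[of t] t i by auto
    next
      case False
      then obtain t where t: "i = 2 * t + 1" by (metis oddE)
      have tk: "t < ?k" using i t by auto
      have "(i + 1) mod (2*?k) = 2 * (Suc t mod ?k)"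
        using t by (simp add: mult_mod_right)
      moreover have "2 * (Suc t mod ?k) < 2 * ?k"
      proof -
        have "0 < ?k" using l by linarith
        then show ?thesis by simp
      qed
      ultimately have "vs ! ((i + 1) mod (2*?k)) = xs ! (Suc t mod ?k)" using nv by simp
      moreover have "vs ! i = zs ! t" using t nv i by simp
      ultimately show ?thesis using cy[OF tk] by (simp add: insert_commute)
    qed
  qed
  show ?thesis unfolding has_cycle_of_length_def
    using lv dv sv ev l by (intro conjI exI[of _ vs]) auto
qed

locale jk =
  fixes N :: "'a \<Rightarrow> 'a set" and Y :: "'a set" and \<delta> :: nat
  assumes finY: "finite Y" and cardY: "card Y + 1 \<le> 2 * \<delta>"
begin

definition hc :: "'a set \<Rightarrow> bool" where
  "hc X \<longleftrightarrow> (\<exists>xs zs. cyc N xs zs \<and> distinct xs \<and> set xs = X \<and> distinct zs \<and> set zs \<subseteq> Y)"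

lemma L_ins:
  assumes c: "cyc N xs zs" "distinct xs" "distinct zs" "set zs \<subseteq> Y" "x \<notin> set xs"
    and i: "i < length xs" and uw: "u \<noteq> w" "u \<in> N x" "w \<in> N x" "u \<in> N (xs!i)"
    "w \<in> N (xs!(Suc i mod length xs))" "u \<in> Y" "w \<in> Y"
    "u \<notin> set zs - {zs!i}" "w \<notin> set zs - {zs!i}"
  shows "hc (insert x (set xs))"
proof -
  let ?P = "rotate (Suc i) xs" and ?Ys = "butlast (rotate (Suc i) zs)"
  note g = gap1[OF c(1) c(3) i]
  have ne: "?P \<noteq> []" using c(1) by (cases xs) (auto simp: cyc_def)
  have p1: "xpath N (?P @ [x]) (?Ys @ [u])"
    using xpath_append[OF g(1) xpath_single[of N x], of u] g(3) uw by simp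
  have lp: "2 \<le> length (?P @ [x])" using ne by (cases ?P) auto
  have cy: "cyc N (?P @ [x]) ((?Ys @ [u]) @ [w])"
    by (rule cyc_of_path[OF p1]) (use uw g(4) ne lp in auto)
  show ?thesis unfolding hc_def
    apply (rule exI[of _ "?P @ [x]"], rule exI[of _ "(?Ys @ [u]) @ [w]"])
    using cy c g uw by (auto dest: in_set_butlastD)
qed

lemma L_rot:
  assumes c: "cyc N xs zs" "distinct xs" "distinct zs" "set zs \<subseteq> Y" "x \<notin> set xs"
    and il: "i < length xs" "l < length xs" "i \<noteq> l" and zx: "zs!i \<in> N x" "zs!l \<in> N x"
    and r: "r \<in> Y" "r \<notin> set zs" "r \<in> N (xs!i)" "r \<in> N (xs!l)"
  shows "hc (insert x (set xs))"
proof -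
  let ?k = "length xs"
  obtain P1 Y1 P2 Y2 where p: "xpath N P1 Y1" "xpath N P2 Y2" "hd P1 = xs!(Suc i mod ?k)"
     "last P1 = xs!l" "hd P2 = xs!(Suc l mod ?k)" "last P2 = xs!i"
     "distinct (P1 @ P2)" "set (P1 @ P2) = set xs" "distinct (Y1 @ Y2)"
     "set (Y1 @ Y2) = set zs - {zs!i, zs!l}"
    using gap2[OF c(1) c(3) c(2) il] by blast
  have ne: "P1 \<noteq> []" "P2 \<noteq> []" using p(1,2) xpath_ne by auto
  have k: "0 < ?k" using il by auto
  have cz: "zs!i \<in> N (xs!(Suc i mod ?k))" "zs!l \<in> N (xs!(Suc l mod ?k))"
    using c(1) il unfolding cyc_def by auto
  have q1: "xpath N (rev P1) (rev Y1)" by (rule xpath_rev[OF p(1)])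
  have q2: "xpath N (rev P1 @ [x]) (rev Y1 @ [zs!i])"
    using xpath_append[OF q1 xpath_single[of N x], of "zs!i"] cz zx ne p(3)
    by (simp add: last_rev)
  have q3: "xpath N ((rev P1 @ [x]) @ P2) ((rev Y1 @ [zs!i]) @ zs!l # Y2)"
    by (rule xpath_append[OF q2 p(2)]) (use zx cz p(5) in auto)
  have lp: "2 \<le> length ((rev P1 @ [x]) @ P2)" using ne by (cases P2) auto
  have cy: "cyc N ((rev P1 @ [x]) @ P2) (((rev Y1 @ [zs!i]) @ zs!l # Y2) @ [r])"
    by (rule cyc_of_path[OF q3]) (use r ne p(4,6) lp in \<open>auto simp: hd_rev\<close>)
  have zil: "zs!i \<noteq> zs!l" using il c(3) c(1) by (auto simp: cyc_def nth_eq_iff_index_eq)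
  have zsin: "zs!i \<in> set zs" "zs!l \<in> set zs" using il c(1) by (auto simp: cyc_def)
  show ?thesis unfolding hc_def
    apply (rule exI[of _ "(rev P1 @ [x]) @ P2"], rule exI[of _ "((rev Y1 @ [zs!i]) @ zs!l # Y2) @ [r]"])
    using cy c p zil zsin r by auto
qed

lemma L_cons:
  assumes c: "cyc N xs zs" "distinct xs" "distinct zs" "set zs \<subseteq> Y" "x \<notin> set xs"
    and lj: "l < length xs" "j < length xs" "l \<noteq> j" and zx: "zs!l \<in> N x" "zs!j \<in> N x"
    and zc: "set zs \<subseteq> N (xs!j)"
    and r: "r \<in> Y" "r \<notin> set zs" "r \<in> N (xs!l)" "r \<in> N (xs!(Suc j mod length xs))"
    and bne: "xs!(Suc j mod length xs) \<noteq> xs!l"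
  shows "hc (insert x (set xs))"
proof -
  let ?k = "length xs"
  let ?b = "xs!(Suc j mod ?k)"
  obtain P1 Y1 P2 Y2 where p: "xpath N P1 Y1" "xpath N P2 Y2" "hd P1 = xs!(Suc l mod ?k)"
     "last P1 = xs!j" "hd P2 = ?b" "last P2 = xs!l"
     "distinct (P1 @ P2)" "set (P1 @ P2) = set xs" "distinct (Y1 @ Y2)"
     "set (Y1 @ Y2) = set zs - {zs!l, zs!j}"
    using gap2[OF c(1) c(3) c(2) lj] by blast
  have ne: "P1 \<noteq> []" "P2 \<noteq> []" using p(1,2) xpath_ne by auto
  obtain b' c' rest where P2: "P2 = b' # c' # rest"
  proof (cases P2)
    case Nil then show ?thesis using ne by simp
  next
    case (Cons b' t)
    show ?thesis
    proof (cases t)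
      case Nil then show ?thesis using Cons p(5,6) bne by simp
    next
      case (Cons c' rest) then show ?thesis using \<open>P2 = b' # t\<close> that by simp
    qed
  qed
  have b': "b' = ?b" using P2 p(5) by simp
  obtain z1 Y2' where Y2: "Y2 = z1 # Y2'" using p(2) P2 by (cases Y2) (auto simp: xpath_def)
  have z1: "z1 \<in> N b'" "z1 \<in> N c'" "xpath N (c' # rest) Y2'"
    using p(2) unfolding P2 Y2 xpath_Cons2 by auto
  have cz: "zs!l \<in> N (xs!(Suc l mod ?k))" "zs!j \<in> N ?b"
    using c(1) lj unfolding cyc_def by auto
  have q1: "xpath N ([x] @ P1) ([] @ zs!l # Y1)"
    by (rule xpath_append[OF xpath_single p(1)]) (use zx cz p(3) in auto)
  have z1s: "z1 \<in> set zs" using p(10) Y2 by auto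
  have q2: "xpath N (([x] @ P1) @ (c' # rest)) (([] @ zs!l # Y1) @ z1 # Y2')"
    by (rule xpath_append[OF q1 z1(3)]) (use z1s zc z1 p(4) ne in auto)
  have q3: "xpath N ((([x] @ P1) @ (c' # rest)) @ [b']) ((([] @ zs!l # Y1) @ z1 # Y2') @ r # [])"
    by (rule xpath_append[OF q2 xpath_single]) (use r p(6) P2 b' in auto)
  let ?xs = "(([x] @ P1) @ (c' # rest)) @ [b']"
  let ?zs = "((([] @ zs!l # Y1) @ z1 # Y2') @ r # []) @ [zs!j]"
  have lp: "2 \<le> length ?xs" by simp
  have cy: "cyc N ?xs ?zs"
    by (rule cyc_of_path[OF q3]) (use cz zx b' lp in auto)
  have zlj: "zs!l \<noteq> zs!j" using lj c(3) c(1) by (auto simp: cyc_def nth_eq_iff_index_eq)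
  have zsin: "zs!l \<in> set zs" "zs!j \<in> set zs" using lj c(1) by (auto simp: cyc_def)
  have sx: "set ?xs = insert x (set xs)" using p(8) P2 by auto
  have dx: "distinct ?xs" using p(7) c(5) p(8) P2 by auto
  have dz: "distinct ?zs" using p(9) p(10) Y2 zlj zsin r by auto
  have sz: "set ?zs \<subseteq> Y" using p(10) Y2 zsin r c(4) by auto
  show ?thesis unfolding hc_def
    apply (rule exI[of _ ?xs], rule exI[of _ ?zs])
    using cy sx dx dz sz by blast
qed

end

lemma xpath_complete:
  assumes a: "length xs = Suc (length ys)" "\<forall>v\<in>set xs. set ys \<subseteq> N v"
  shows "xpath N xs ys"
  unfolding xpath_def
proof (rule conjI)
  show "length xs = Suc (length ys)" by (rule a(1))
  show "\<forall>i<length ys. ys ! i \<in> N (xs ! i) \<and> ys ! i \<in> N (xs ! Suc i)"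
  proof (intro allI impI)
    fix i assume i: "i < length ys"
    have "xs!i \<in> set xs" "xs!Suc i \<in> set xs" "ys!i \<in> set ys" using a i by auto
    then show "ys ! i \<in> N (xs ! i) \<and> ys ! i \<in> N (xs ! Suc i)" using a by blast
  qed
qed

lemma exists_list_card:
  assumes "finite S" "n \<le> card S"
  shows "\<exists>xs. distinct xs \<and> set xs \<subseteq> S \<and> length xs = n"
proof -
  obtain T where T: "T \<subseteq> S" "card T = n" using obtain_subset_with_card_n[OF assms(2)] by metis
  have "finite T" using T assms(1) finite_subset by auto
  then obtain xs where "set xs = T" "distinct xs" using finite_distinct_list by metis
  moreover have "length xs = n" using T(2) \<open>set xs = T\<close> \<open>distinct xs\<close> distinct_card by metis
  ultimately show ?thesis using T by (intro exI[of _ xs]) auto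
qed

context jk begin

definition G2S :: "'a set \<Rightarrow> bool" where
  "G2S X \<longleftrightarrow> (\<exists>A B y0 P Q. X = A \<union> B \<and> A \<inter> B = {} \<and> A \<noteq> {} \<and> B \<noteq> {} \<and>
     Y = insert y0 (P \<union> Q) \<and> y0 \<notin> P \<and> y0 \<notin> Q \<and> P \<inter> Q = {} \<and>
     card P = \<delta> - 1 \<and> card Q = \<delta> - 1 \<and> (\<forall>a\<in>A. N a = insert y0 P) \<and> (\<forall>b\<in>B. N b = insert y0 Q))"

definition G1S :: "'a set \<Rightarrow> bool" where
  "G1S X \<longleftrightarrow> (\<exists>Y0. Y0 \<subseteq> Y \<and> card Y0 = \<delta> - 1 \<and> (\<forall>v\<in>X. Y0 \<subseteq> N v \<and> card (N v - Y0) = 1) \<and>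
     (\<forall>v\<in>X. \<forall>w\<in>X. v \<noteq> w \<longrightarrow> (N v - Y0) \<inter> (N w - Y0) = {}) \<and> Y = Y0 \<union> (\<Union>v\<in>X. N v))"

lemma base:
  assumes uv: "u \<noteq> v" and d: "N u \<subseteq> Y" "N v \<subseteq> Y" "\<delta> \<le> card (N u)" "\<delta> \<le> card (N v)"
  shows "hc {u, v} \<or> G2S {u, v}"
proof -
  have fin: "finite (N u)" "finite (N v)" using d finY finite_subset by auto
  have cu: "card (N u \<union> N v) + card (N u \<inter> N v) = card (N u) + card (N v)"
    using card_Un_Int[OF fin] by simp
  have le: "card (N u \<union> N v) \<le> card Y" using d finY by (intro card_mono) auto
  then have ci: "1 \<le> card (N u \<inter> N v)" using cu d cardY by linarith
  show ?thesis
  proof (cases "\<exists>c1 c2. c1 \<in> N u \<inter> N v \<and> c2 \<in> N u \<inter> N v \<and> c1 \<noteq> c2")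
    case True
    then obtain c1 c2 where c: "c1 \<in> N u \<inter> N v" "c2 \<in> N u \<inter> N v" "c1 \<noteq> c2" by blast
    have "cyc N [u, v] [c1, c2]" unfolding cyc_def using c
      by (auto simp: less_Suc_eq nth_Cons split: nat.splits)
    then have "hc {u, v}" unfolding hc_def using c uv d
      by (intro exI[of _ "[u, v]"] exI[of _ "[c1, c2]"]) auto
    then show ?thesis by simp
  next
    case False
    obtain c where c: "c \<in> N u \<inter> N v" using ci by (metis card.empty ex_in_conv not_one_le_zero)
    then have i1: "N u \<inter> N v = {c}" using False by blast
    then have "card (N u \<union> N v) + 1 = card (N u) + card (N v)" using cu by simp
    have "card (N u \<union> N v) = card Y"
      using \<open>card (N u \<union> N v) + 1 = card (N u) + card (N v)\<close> d cardY le by linarith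
    then have uY: "N u \<union> N v = Y"
      using d by (intro card_subset_eq[OF finY]) auto
    have cY: "card Y + 1 = card (N u) + card (N v)"
      using \<open>card (N u \<union> N v) + 1 = card (N u) + card (N v)\<close> uY by simp
    have cu1: "card (N u) = \<delta>" "card (N v) = \<delta>" using cY d cardY by linarith+
    have cd: "card (N u - {c}) = \<delta> - 1" "card (N v - {c}) = \<delta> - 1"
      using c cu1 fin by (simp_all add: card_Diff_singleton)
    have "G2S {u, v}" unfolding G2S_def
      apply (rule exI[of _ "{u}"], rule exI[of _ "{v}"], rule exI[of _ c],
             rule exI[of _ "N u - {c}"], rule exI[of _ "N v - {c}"])
      using uv uY i1 c cd by auto
    then show ?thesis by simp
  qed
qed

lemma G2ext:
  assumes g: "G2S X'" and x: "x \<notin> X'" "N x \<subseteq> Y" "\<delta> \<le> card (N x)"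
    and fX: "finite X'" and cX: "card X' + 1 \<le> \<delta>"
  shows "hc (insert x X') \<or> G2S (insert x X')"
proof -
  obtain A B y0 P Q where G: "X' = A \<union> B" "A \<inter> B = {}" "A \<noteq> {}" "B \<noteq> {}"
     "Y = insert y0 (P \<union> Q)" "y0 \<notin> P" "y0 \<notin> Q" "P \<inter> Q = {}"
     "card P = \<delta> - 1" "card Q = \<delta> - 1" "\<forall>a\<in>A. N a = insert y0 P" "\<forall>b\<in>B. N b = insert y0 Q"
    using g unfolding G2S_def by blast
  have fin: "finite A" "finite B" "finite P" "finite Q" using G fX finY by auto
  have cAB: "card A + card B = card X'" using G fin by (simp add: card_Un_disjoint)
  have cA: "1 \<le> card A" "1 \<le> card B" using G fin by (auto simp: Suc_le_eq card_gt_0_iff)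
  have d2: "2 \<le> \<delta>" using cX cAB cA by linarith
  have cyP: "card (insert y0 P) = \<delta>" "card (insert y0 Q) = \<delta>" using G fin d2 by auto
  show ?thesis
  proof (cases "N x \<subseteq> insert y0 P")
    case True
    moreover have "card (N x) \<le> card (insert y0 P)" using True fin by (intro card_mono) auto
    ultimately have "N x = insert y0 P" using x cyP fin by (intro card_subset_eq) auto
    then have "G2S (insert x X')" unfolding G2S_def
      apply (rule_tac exI[of _ "insert x A"], rule_tac exI[of _ B], rule_tac exI[of _ y0],
             rule_tac exI[of _ P], rule_tac exI[of _ Q])
      using G x by auto
    then show ?thesis by simp
  next
    case F1: False
    show ?thesis
    proof (cases "N x \<subseteq> insert y0 Q")
      case True
      moreover have "card (N x) \<le> card (insert y0 Q)" using True fin by (intro card_mono) auto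
      ultimately have "N x = insert y0 Q" using x cyP fin by (intro card_subset_eq) auto
      then have "G2S (insert x X')" unfolding G2S_def
        apply (rule_tac exI[of _ A], rule_tac exI[of _ "insert x B"], rule_tac exI[of _ y0],
               rule_tac exI[of _ P], rule_tac exI[of _ Q])
        using G x by auto
      then show ?thesis by simp
    next
      case F2: False
      obtain p where p: "p \<in> N x" "p \<in> Q" using F1 x G(5) by blast
      obtain q where q: "q \<in> N x" "q \<in> P" using F2 x G(5) by blast
      obtain as where as: "set as = A" "distinct as" using finite_distinct_list[OF fin(1)] by metis
      obtain bs where bs: "set bs = B" "distinct bs" using finite_distinct_list[OF fin(2)] by metis
      have la: "length as = card A" "length bs = card B" using as bs distinct_card by metis+
      have "card A - 1 \<le> card (P - {q})" using q fin G cX cAB cA by (simp add: card_Diff_singleton)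
      then obtain ps where ps: "distinct ps" "set ps \<subseteq> P - {q}" "length ps = card A - 1"
        using exists_list_card[of "P - {q}" "card A - 1"] fin by auto
      have "card B - 1 \<le> card (Q - {p})" using p fin G cX cAB cA by (simp add: card_Diff_singleton)
      then obtain qs where qs: "distinct qs" "set qs \<subseteq> Q - {p}" "length qs = card B - 1"
        using exists_list_card[of "Q - {p}" "card B - 1"] fin by auto
      have pa: "xpath N as ps" using la ps as G cA by (intro xpath_complete) auto
      have pb: "xpath N bs qs" using la qs bs G cA by (intro xpath_complete) auto
      have ane: "as \<noteq> []" "bs \<noteq> []" using as bs G by auto
      have q1: "xpath N ([x] @ as) ([] @ q # ps)"
        by (rule xpath_append[OF xpath_single pa]) (use q ane as G in auto)
      have "last as \<in> A" using ane as by auto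
      then have q2: "xpath N (([x] @ as) @ bs) (([] @ q # ps) @ y0 # bs')" if "bs' = qs" for bs'
        using xpath_append[OF q1 pb, of y0] that ane bs G by auto
      have "last bs \<in> B" using ane bs by auto
      then have cy: "cyc N (([x] @ as) @ bs) ((([] @ q # ps) @ y0 # qs) @ [p])"
        by (intro cyc_of_path[OF q2]) (use p G ane la cA in auto)
      have "hc (insert x X')" unfolding hc_def
        apply (rule exI[of _ "([x] @ as) @ bs"], rule exI[of _ "(([] @ q # ps) @ y0 # qs) @ [p]"])
        using cy as bs ps qs p q G x by auto
      then show ?thesis by simp
    qed
  qed
qed

end

locale anl = jk +
  fixes X' :: "'a set" and x :: 'a and xs zs :: "'a list" and k :: nat
  assumes fX: "finite X'" and xX: "x \<notin> X'" and cX: "card X' = k" and k2: "2 \<le> k"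
    and kd: "k + 1 \<le> \<delta>"
    and deg: "\<forall>v\<in>insert x X'. N v \<subseteq> Y \<and> \<delta> \<le> card (N v)"
    and C: "cyc N xs zs" "distinct xs" "set xs = X'" "distinct zs" "set zs \<subseteq> Y"
    and minC: "\<forall>xs' zs'. cyc N xs' zs' \<and> distinct xs' \<and> set xs' = X' \<and> distinct zs' \<and> set zs' \<subseteq> Y
         \<longrightarrow> card (N x \<inter> set zs) \<le> card (N x \<inter> set zs')"
    and nohc: "\<not> hc (insert x X')"
begin

abbreviation "S \<equiv> N x"
abbreviation "Z \<equiv> set zs"
abbreviation "R \<equiv> Y - set zs"
abbreviation "nx i \<equiv> xs ! (Suc i mod k)"

lemma lk: "length xs = k" "length zs = k"
  using C cX distinct_card by (metis, metis cyc_def)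

lemma cZ: "card Z = k" using C(4) lk distinct_card by metis

lemma adj: "i < k \<Longrightarrow> zs!i \<in> N (xs!i) \<and> zs!i \<in> N (nx i)"
  using C(1) lk unfolding cyc_def by auto

lemma SY: "S \<subseteq> Y" "finite S" "\<delta> \<le> card S" using deg finY finite_subset by auto

lemma NY: "v \<in> X' \<Longrightarrow> N v \<subseteq> Y \<and> finite (N v) \<and> \<delta> \<le> card (N v)"
  using deg finY finite_subset by auto

lemma xin: "i < k \<Longrightarrow> xs!i \<in> X'" using C(3) lk by auto

lemma nxin: "i < k \<Longrightarrow> nx i \<in> X'"
proof -
  have "0 < k" using k2 by simp
  then have "Suc i mod k < k" by simp
  then show ?thesis using xin by blast
qed

lemma nx_lt: "Suc i < k \<Longrightarrow> nx i = xs ! Suc i" by simp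

lemma Xv: "v \<in> X' \<Longrightarrow> \<exists>i<k. v = xs!i" using C(3) lk by (auto simp: in_set_conv_nth)

lemma zin: "i < k \<Longrightarrow> zs!i \<in> Z" using lk by auto

lemma F_ins:
  assumes "i < k" "u \<noteq> w" "u \<in> S" "w \<in> S" "u \<in> N (xs!i)" "w \<in> N (nx i)"
    "u \<notin> Z - {zs!i}" "w \<notin> Z - {zs!i}"
  shows False
proof -
  have "u \<in> Y" "w \<in> Y" using assms SY by auto
  then have "hc (insert x (set xs))"
    using L_ins[OF C(1) C(2) C(4) C(5), of x i u w] assms xX C(3) lk by auto
  then show False using nohc C(3) by simp
qed

lemma card_split: "v \<in> insert x X' \<Longrightarrow> card (N v) = card (N v \<inter> Z) + card (N v \<inter> R)"
proof -
  assume v: "v \<in> insert x X'"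
  have f: "finite (N v)" using deg v finY finite_subset by blast
  have "N v = (N v \<inter> Z) \<union> (N v \<inter> R)" using deg v by auto
  moreover have "(N v \<inter> Z) \<inter> (N v \<inter> R) = {}" by auto
  ultimately show ?thesis using f by (metis card_Un_disjoint finite_Int)
qed

lemma cardR: "card R + k = card Y"
proof -
  have "card Z \<le> card Y" using C(5) finY by (intro card_mono)
  then show ?thesis using C(5) finY cZ by (simp add: card_Diff_subset)
qed

lemma cardNR: "v \<in> insert x X' \<Longrightarrow> \<delta> - k \<le> card (N v \<inter> R)"
proof -
  assume v: "v \<in> insert x X'"
  have "card (N v \<inter> Z) \<le> k" using cZ by (metis card_mono finite_set inf_le2)
  then show ?thesis using card_split[OF v] deg v by auto
qed

lemma meet: "v \<in> X' \<Longrightarrow> N v \<inter> S \<noteq> {}"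
proof
  assume v: "v \<in> X'" and e: "N v \<inter> S = {}"
  have f: "finite (N v)" "finite S" using NY[OF v] SY by auto
  have "card (N v \<union> S) = card (N v) + card S" using f e by (simp add: card_Un_disjoint)
  moreover have "card (N v \<union> S) \<le> card Y" using NY[OF v] SY finY by (intro card_mono) auto
  ultimately show False using NY[OF v] SY cardY by linarith
qed

end

context anl begin
lemma case_s0:
  assumes s0: "S \<inter> Z = {}"
  shows "G2S (insert x X')"
proof -
  have gap: "\<And>i. i < k \<Longrightarrow> N (xs!i) \<inter> S = N (nx i) \<inter> S \<and> (\<exists>u. N (xs!i) \<inter> S = {u})"
  proof -
    fix i assume i: "i < k"
    have eq: "u = w" if uw: "u \<in> N (xs!i) \<inter> S" "w \<in> N (nx i) \<inter> S" for u w
    proof (rule ccontr)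
      assume ne: "u \<noteq> w"
      have "u \<notin> Z" "w \<notin> Z" using uw s0 by auto
      then show False using F_ins[OF i ne] uw by auto
    qed
    obtain u where u: "u \<in> N (xs!i) \<inter> S" using meet[OF xin[OF i]] by blast
    obtain w where w: "w \<in> N (nx i) \<inter> S" using meet[OF nxin[OF i]] by blast
    have uw: "u = w" using eq[OF u w] .
    have 1: "a = u" if "a \<in> N (xs!i) \<inter> S" for a using eq[OF that w] uw by simp
    have 2: "b = u" if "b \<in> N (nx i) \<inter> S" for b using eq[OF u that] by simp
    have e1: "N (xs!i) \<inter> S = {u}" using 1 u by blast
    have e2: "N (nx i) \<inter> S = {u}" using 2 w uw by blast
    show "N (xs!i) \<inter> S = N (nx i) \<inter> S \<and> (\<exists>u. N (xs!i) \<inter> S = {u})"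
      using e1 e2 by blast
  qed
  have propg: "\<And>i. i < k \<Longrightarrow> N (xs!i) \<inter> S = N (xs!0) \<inter> S"
  proof -
    fix i show "i < k \<Longrightarrow> N (xs!i) \<inter> S = N (xs!0) \<inter> S"
    proof (induction i)
      case 0 then show ?case by simp
    next
      case (Suc j)
      have j: "j < k" using Suc.prems by simp
      have "N (xs!j) \<inter> S = N (nx j) \<inter> S" using gap[OF j] by blast
      moreover have "nx j = xs ! Suc j" using Suc.prems by simp
      ultimately have "N (xs!Suc j) \<inter> S = N (xs!j) \<inter> S" by simp
      also have "\<dots> = N (xs!0) \<inter> S" using Suc.IH j by blast
      finally show ?case .
    qed
  qed
  obtain u0 where u0: "N (xs!0) \<inter> S = {u0}" using gap[of 0] k2 by auto
  have all: "N v \<inter> S = {u0}" if v: "v \<in> X'" for v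
  proof -
    obtain i where i: "i < k" "v = xs!i" using Xv[OF v] by blast
    show ?thesis using propg[OF i(1)] i(2) u0 by simp
  qed
  have big: "\<And>v. v \<in> X' \<Longrightarrow> N v \<union> S = Y \<and> card (N v) = \<delta> \<and> card S = \<delta> \<and> card Y + 1 = 2 * \<delta>"
  proof -
    fix v assume v: "v \<in> X'"
    have f: "finite (N v)" "finite S" using NY[OF v] SY by auto
    have "card (N v \<union> S) + card (N v \<inter> S) = card (N v) + card S" using card_Un_Int[OF f] by simp
    then have c1: "card (N v \<union> S) + 1 = card (N v) + card S" using all[OF v] by simp
    have sub: "N v \<union> S \<subseteq> Y" using NY[OF v] SY by auto
    then have le: "card (N v \<union> S) \<le> card Y" using finY by (intro card_mono) auto
    have "card (N v \<union> S) = card Y" using c1 le NY[OF v] SY cardY by linarith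
    then have "N v \<union> S = Y" using sub by (intro card_subset_eq[OF finY]) auto
    then show "N v \<union> S = Y \<and> card (N v) = \<delta> \<and> card S = \<delta> \<and> card Y + 1 = 2 * \<delta>"
      using c1 le NY[OF v] SY cardY \<open>card (N v \<union> S) = card Y\<close> by auto
  qed
  have x0: "xs!0 \<in> X'" using xin k2 by auto
  have cS: "card S = \<delta>" "card Y + 1 = 2 * \<delta>" using big[OF x0] by auto
  have u0S: "u0 \<in> S" using u0 by auto
  have cP: "card (Y - S) = \<delta> - 1" using cS SY finY by (simp add: card_Diff_subset)
  have cQ: "card (S - {u0}) = \<delta> - 1" using cS u0S by (simp add: card_Diff_singleton)
  have NA: "\<And>a. a \<in> X' \<Longrightarrow> N a = insert u0 (Y - S)"
  proof -
    fix a assume a: "a \<in> X'"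
    have e1: "N a \<inter> S = {u0}" and e2: "N a \<union> S = Y" and e3: "N a \<subseteq> Y"
      using all[OF a] big[OF a] NY[OF a] by auto
    show "N a = insert u0 (Y - S)"
    proof (intro equalityI subsetI)
      fix y assume "y \<in> N a" then show "y \<in> insert u0 (Y - S)" using e1 e3 by auto
    next
      fix y assume y: "y \<in> insert u0 (Y - S)"
      show "y \<in> N a"
      proof (cases "y = u0")
        case True then show ?thesis using e1 by auto
      next
        case False then show ?thesis using y e2 by auto
      qed
    qed
  qed
  have Yeq: "Y = insert u0 ((Y - S) \<union> (S - {u0}))" using u0S SY by auto
  have NB: "N x = insert u0 (S - {u0})" using u0S by auto
  have ne: "X' \<noteq> {}" using x0 by auto
  have PQ: "(Y - S) \<inter> (S - {u0}) = {}" by auto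
  show ?thesis unfolding G2S_def
    apply (rule exI[of _ X'], rule exI[of _ "{x}"], rule exI[of _ u0],
           rule exI[of _ "Y - S"], rule exI[of _ "S - {u0}"])
    apply (intro conjI)
    using xX ne Yeq u0S cP cQ NA NB PQ by simp_all
qed

end

context anl begin

definition "J = {i. i < k \<and> zs!i \<in> S}"
definition "A i = N (xs!i) \<inter> R"
definition "B i = N (nx i) \<inter> R"
definition "SR = S \<inter> R"

lemma finJ: "finite J" unfolding J_def by simp

lemma cardJ: "card J = card (S \<inter> Z)"
proof -
  have "(\<lambda>i. zs!i) ` J = S \<inter> Z" unfolding J_def using lk
    by (auto simp: in_set_conv_nth)
  moreover have "inj_on (\<lambda>i. zs!i) J" unfolding J_def inj_on_def using C(4) lk
    by (auto simp: nth_eq_iff_index_eq)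
  ultimately show ?thesis by (metis card_image)
qed

lemma Jk: "i \<in> J \<Longrightarrow> i < k" "i \<in> J \<Longrightarrow> zs!i \<in> S" by (auto simp: J_def)

lemma D1:
  assumes i: "i \<in> J" and r: "r \<in> S" "r \<in> R"
  shows "r \<notin> N (xs!i) \<and> r \<notin> N (nx i)"
proof -
  have ik: "i < k" and zi: "zs!i \<in> S" using i by (auto simp: J_def)
  have rz: "r \<noteq> zs!i" "r \<notin> Z" using r zin[OF ik] by auto
  have a: "zs!i \<in> N (xs!i)" "zs!i \<in> N (nx i)" using adj[OF ik] by auto
  have "r \<notin> N (xs!i)"
  proof
    assume "r \<in> N (xs!i)"
    then show False using F_ins[OF ik rz(1) r(1) zi] a rz by auto
  qed
  moreover have "r \<notin> N (nx i)"
  proof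
    assume "r \<in> N (nx i)"
    then show False using F_ins[OF ik rz(1)[symmetric] zi r(1)] a rz by auto
  qed
  ultimately show ?thesis by simp
qed

lemma D2:
  assumes i: "i \<in> J" and r: "r \<in> R" "r \<in> N (xs!i)" "r \<in> N (nx i)"
  shows False
proof -
  have ik: "i < k" and zi: "zs!i \<in> S" using i by (auto simp: J_def)
  have rS: "r \<notin> S" using D1[OF i _ r(1)] r(2) by blast
  let ?zs = "zs[i := r]"
  have cy: "cyc N xs ?zs" unfolding cyc_def
  proof (intro conjI allI impI)
    show "length ?zs = length xs" using lk by simp
    show "2 \<le> length xs" using lk k2 by simp
  next
    fix t assume t: "t < length xs"
    show "?zs ! t \<in> N (xs ! t)" using adj[of t] t lk r by (cases "t = i") auto
    show "?zs ! t \<in> N (xs ! (Suc t mod length xs))" using adj[of t] t lk r by (cases "t = i") auto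
  qed
  have rZ: "r \<notin> Z" using r by auto
  have dz: "distinct ?zs" using C(4) rZ by (simp add: distinct_list_update)
  have sz: "set ?zs = insert r (Z - {zs!i})" using C(4) ik lk by (simp add: set_update_distinct)
  have szY: "set ?zs \<subseteq> Y" using sz C(5) r by auto
  have "card (S \<inter> Z) \<le> card (S \<inter> set ?zs)" using minC cy C(2,3) dz szY by blast
  moreover have "S \<inter> set ?zs = (S \<inter> Z) - {zs!i}" using sz rS by auto
  moreover have "zs!i \<in> S \<inter> Z" using zi zin[OF ik] by auto
  moreover have "finite (S \<inter> Z)" by simp
  ultimately show False by (metis card_Diff1_less not_le)
qed

lemma D3:
  assumes i: "i \<in> J" and l: "l \<in> J" and il: "i \<noteq> l"
    and r: "r \<in> R" "r \<in> N (xs!i)" "r \<in> N (xs!l)"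
  shows False
proof -
  have "hc (insert x (set xs))"
    using L_rot[OF C(1) C(2) C(4) C(5), of x i l r] Jk[OF i] Jk[OF l] il r xX C(3) lk by auto
  then show False using nohc C(3) by simp
qed

lemma finR: "finite R" using finY by simp

lemma cA: "i < k \<Longrightarrow> \<delta> \<le> card (A i) + k"
  using cardNR[of "xs!i"] xin[of i] by (auto simp: A_def)

lemma cB: "i < k \<Longrightarrow> \<delta> \<le> card (B i) + k"
  using cardNR[of "nx i"] nxin[of i] by (auto simp: B_def)

lemma cSR: "card SR + card (S \<inter> Z) = card S"
  using card_split[of x] by (simp add: SR_def Int_commute)

lemma C1:
  assumes i: "i \<in> J"
  shows "card (A i) + card (B i) + card SR \<le> card R"
proof -
  have d1: "A i \<inter> B i = {}" using D2[OF i] by (auto simp: A_def B_def)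
  have d2: "A i \<inter> SR = {}" "B i \<inter> SR = {}" using D1[OF i] by (auto simp: A_def B_def SR_def)
  have f: "finite (A i)" "finite (B i)" "finite SR" using finR by (auto simp: A_def B_def SR_def)
  have "card (A i \<union> B i \<union> SR) = card (A i) + card (B i) + card SR"
    using d1 d2 f by (simp add: card_Un_disjoint Int_Un_distrib2)
  moreover have "card (A i \<union> B i \<union> SR) \<le> card R"
    using finR by (intro card_mono) (auto simp: A_def B_def SR_def)
  ultimately show ?thesis by simp
qed

lemma UA: "card (\<Union>i\<in>J. A i) = (\<Sum>i\<in>J. card (A i))"
  using finJ finR D3 by (intro card_UN_disjoint) (auto simp: A_def)

lemma C2: "card SR + (\<Sum>i\<in>J. card (A i)) \<le> card R"
proof -
  have d: "SR \<inter> (\<Union>i\<in>J. A i) = {}" using D1 by (auto simp: A_def SR_def)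
  have f: "finite SR" "finite (\<Union>i\<in>J. A i)" using finR finJ by (auto simp: A_def SR_def)
  have "card (SR \<union> (\<Union>i\<in>J. A i)) = card SR + (\<Sum>i\<in>J. card (A i))"
    using d f UA by (simp add: card_Un_disjoint)
  moreover have "card (SR \<union> (\<Union>i\<in>J. A i)) \<le> card R"
    using finR by (intro card_mono) (auto simp: A_def SR_def)
  ultimately show ?thesis by simp
qed

lemma dk:
  assumes s1: "S \<inter> Z \<noteq> {}"
  shows "\<delta> = k + 1"
proof (rule ccontr)
  assume ne: "\<delta> \<noteq> k + 1"
  define D where "D = \<delta> - k"
  have D: "\<delta> = D + k" "2 \<le> D" using kd ne by (auto simp: D_def)
  have sJ: "card J \<ge> 1" using s1 cardJ by (simp add: Suc_le_eq card_gt_0_iff)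
  then obtain i0 where i0: "i0 \<in> J" by (metis card.empty ex_in_conv not_one_le_zero)
  have c1: "card (A i0) + card (B i0) + card SR \<le> card R" by (rule C1[OF i0])
  have a0: "\<delta> \<le> card (A i0) + k" "\<delta> \<le> card (B i0) + k" using cA cB Jk[OF i0] by auto
  have "card J * D \<le> (\<Sum>i\<in>J. card (A i))"
    using sum_bounded_below[of J D "\<lambda>i. card (A i)"] cA Jk D by fastforce
  moreover have "card J * 2 \<le> card J * D" using D by simp
  ultimately have sm: "card J * 2 \<le> (\<Sum>i\<in>J. card (A i))" by linarith
  have c2: "card SR + (\<Sum>i\<in>J. card (A i)) \<le> card R" by (rule C2)
  have cs: "card SR + card J = card S" using cSR cardJ by simp
  have "\<delta> \<le> card S" using SY by simp
  then show False using c1 a0 sm c2 cs cardR cardY D by linarith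
qed

end

context anl begin

lemma case_s1:
  assumes s1: "S \<inter> Z \<noteq> {}"
  shows "\<delta> = k + 1 \<and> G1S (insert x X')"
proof -
  have d: "\<delta> = k + 1" by (rule dk[OF s1])
  have cs: "card SR + card J = card S" using cSR cardJ by simp
  have dS: "\<delta> \<le> card S" using SY by simp
  have cR: "card R \<le> k + 1" using cardR cardY d by linarith
  have ge1: "1 \<le> card (A i)" if "i \<in> J" for i using cA[OF Jk(1)[OF that]] d by linarith
  have A1: "card (A i) = 1" if i: "i \<in> J" for i
  proof (rule ccontr)
    assume "card (A i) \<noteq> 1"
    then have two: "2 \<le> card (A i)" using ge1[OF i] by linarith
    have "(\<Sum>j\<in>J. card (A j)) = card (A i) + (\<Sum>j\<in>J - {i}. card (A j))"
      using finJ i by (simp add: sum.remove)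
    moreover have "card (J - {i}) * 1 \<le> (\<Sum>j\<in>J - {i}. card (A j))"
      using sum_bounded_below[of "J - {i}" 1 "\<lambda>j. card (A j)"] ge1 by fastforce
    moreover have "card (J - {i}) + 1 = card J"
    proof -
      have "card (J - {i}) = card J - 1" using finJ i by (simp add: card_Diff_singleton)
      moreover have "0 < card J" using finJ i by (auto simp: card_gt_0_iff)
      ultimately show ?thesis by linarith
    qed
    ultimately have "card J + 1 \<le> (\<Sum>j\<in>J. card (A j))" using two by linarith
    then show False using C2 cs dS cR d by linarith
  qed
  have sumJ: "(\<Sum>i\<in>J. card (A i)) = card J" using A1 by simp
  have Zc: "Z \<subseteq> N (xs!i)" if i: "i \<in> J" for i
  proof -
    have ik: "i < k" using Jk(1)[OF i] .
    have xi: "xs!i \<in> insert x X'" using xin[OF ik] by simp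
    have "card (N (xs!i)) = card (N (xs!i) \<inter> Z) + card (A i)"
      using card_split[OF xi] by (simp add: A_def)
    then have "k \<le> card (N (xs!i) \<inter> Z)" using A1[OF i] NY[OF xin[OF ik]] d by linarith
    moreover have "card (N (xs!i) \<inter> Z) \<le> card Z" by (intro card_mono) auto
    ultimately have "card (N (xs!i) \<inter> Z) = card Z" using cZ by linarith
    then have "N (xs!i) \<inter> Z = Z" using card_subset_eq[of Z "N (xs!i) \<inter> Z"] by auto
    then show ?thesis by blast
  qed
  have RU: "R = SR \<union> (\<Union>i\<in>J. A i)"
  proof -
    have d0: "SR \<inter> (\<Union>i\<in>J. A i) = {}" using D1 by (auto simp: A_def SR_def)
    have f: "finite SR" "finite (\<Union>i\<in>J. A i)" using finR finJ by (auto simp: A_def SR_def)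
    have c: "card (SR \<union> (\<Union>i\<in>J. A i)) = card SR + card J"
      using d0 f UA sumJ by (simp add: card_Un_disjoint)
    have sub: "SR \<union> (\<Union>i\<in>J. A i) \<subseteq> R" by (auto simp: A_def SR_def)
    have "card (SR \<union> (\<Union>i\<in>J. A i)) = card R"
      using c cs dS cR d card_mono[OF finR sub] by linarith
    then show ?thesis using sub by (intro card_subset_eq[OF finR, symmetric]) auto
  qed
  have clos: "Suc j mod k \<in> J" if j: "j \<in> J" for j
  proof (rule ccontr)
    assume nj: "Suc j mod k \<notin> J"
    have jk: "j < k" using Jk(1)[OF j] .
    have "1 \<le> card (B j)" using cB[OF jk] d by linarith
    then obtain r where r: "r \<in> B j" by (metis card.empty ex_in_conv not_one_le_zero)
    have rR: "r \<in> R" "r \<in> N (nx j)" using r by (auto simp: B_def)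
    have rS: "r \<notin> S" using D1[OF j _ rR(1)] rR(2) by blast
    then have "r \<in> (\<Union>i\<in>J. A i)" using RU rR(1) by (auto simp: SR_def)
    then obtain l where l: "l \<in> J" "r \<in> N (xs!l)" by (auto simp: A_def)
    have lj: "l \<noteq> j" using D2[OF j rR(1) _ rR(2)] l by blast
    have lk': "l < k" using Jk(1)[OF l(1)] .
    have "l \<noteq> Suc j mod k" using l(1) nj by blast
    moreover have "Suc j mod k < k" using k2 by simp
    ultimately have bne: "nx j \<noteq> xs!l" using C(2) lk lk' by (simp add: nth_eq_iff_index_eq)
    have rY: "r \<in> Y" "r \<notin> Z" using rR by auto
    have "hc (insert x (set xs))"
      using L_cons[OF C(1) C(2) C(4) C(5), of x l j r] xX C(3) lk lk' jk lj Jk[OF l(1)] Jk[OF j]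
        Zc[OF j] rY l(2) rR(2) bne by auto
    then show False using nohc C(3) by simp
  qed
  have "0 < card (S \<inter> Z)" using s1 by (simp add: card_gt_0_iff)
  then have "J \<noteq> {}" using cardJ by auto
  then obtain i0 where i0: "i0 \<in> J" by blast
  have reach: "(i0 + t) mod k \<in> J" for t
  proof (induction t)
    case 0 then show ?case using i0 Jk(1)[OF i0] by simp
  next
    case (Suc t)
    have "(i0 + Suc t) mod k = Suc ((i0 + t) mod k) mod k" by (simp add: mod_Suc_eq)
    then show ?case using clos[OF Suc.IH] by simp
  qed
  have Jall: "i \<in> J" if i: "i < k" for i
  proof -
    have ik0: "i0 < k" using Jk(1)[OF i0] .
    have "(i0 + (k - i0 + i)) mod k = i" using i ik0 by simp
    then show ?thesis using reach[of "k - i0 + i"] by simp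
  qed
  have ZS: "Z \<subseteq> S" using Jall lk by (auto simp: in_set_conv_nth Jk)
  have cJ: "card J = k" using cardJ ZS cZ by (simp add: Int_absorb1)
  have cSR1: "card SR = 1"
  proof -
    have d0: "SR \<inter> (\<Union>i\<in>J. A i) = {}" using D1 by (auto simp: A_def SR_def)
    have f: "finite SR" "finite (\<Union>i\<in>J. A i)" using finR finJ by (auto simp: A_def SR_def)
    have "card R = card SR + card J"
      using RU d0 f UA sumJ by (simp add: card_Un_disjoint)
    then show ?thesis using cJ cR cs dS d by linarith
  qed
  have NxZ: "N x - Z = SR" using SY by (auto simp: SR_def)
  have NvZ: "N (xs!i) - Z = A i" if "i < k" for i using NY[OF xin[OF that]] by (auto simp: A_def)
  show ?thesis
  proof (rule conjI[OF d])
    show "G1S (insert x X')" unfolding G1S_def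
    proof (rule exI[of _ Z], intro conjI ballI impI)
      show "Z \<subseteq> Y" by (rule C(5))
      show "card Z = \<delta> - 1" using cZ d by simp
    next
      fix v assume v: "v \<in> insert x X'"
      show "Z \<subseteq> N v"
      proof (cases "v = x")
        case True then show ?thesis using ZS by simp
      next
        case False
        then obtain i where i: "i < k" "v = xs!i" using v Xv by blast
        then show ?thesis using Zc Jall by blast
      qed
      show "card (N v - Z) = 1"
      proof (cases "v = x")
        case True then show ?thesis using NxZ cSR1 by simp
      next
        case False
        then obtain i where i: "i < k" "v = xs!i" using v Xv by blast
        then show ?thesis using NvZ A1 Jall by simp
      qed
    next
      fix v w assume v: "v \<in> insert x X'" and w: "w \<in> insert x X'" and vw: "v \<noteq> w"
      have AS: "A i \<inter> SR = {}" if "i < k" for i using D1[OF Jall[OF that]] by (auto simp: A_def SR_def)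
      show "(N v - Z) \<inter> (N w - Z) = {}"
      proof (cases "v = x")
        case True
        then have "w \<noteq> x" using vw by simp
        then obtain l where l: "l < k" "w = xs!l" using w Xv by blast
        then show ?thesis using True NxZ NvZ[OF l(1)] AS[OF l(1)] by auto
      next
        case vx: False
        then obtain i where i: "i < k" "v = xs!i" using v Xv by blast
        show ?thesis
        proof (cases "w = x")
          case True then show ?thesis using i NxZ NvZ[OF i(1)] AS[OF i(1)] by auto
        next
          case False
          then obtain l where l: "l < k" "w = xs!l" using w Xv by blast
          have "i \<noteq> l" using i l vw by auto
          then have "A i \<inter> A l = {}" using D3[OF Jall[OF i(1)] Jall[OF l(1)]] by (auto simp: A_def)
          then show ?thesis using i l NvZ by simp
        qed
      qed
    next
      show "Y = Z \<union> (\<Union>v\<in>insert x X'. N v)"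
      proof (intro equalityI subsetI)
        fix y assume y: "y \<in> Y"
        show "y \<in> Z \<union> (\<Union>v\<in>insert x X'. N v)"
        proof (cases "y \<in> Z")
          case True then show ?thesis by simp
        next
          case False
          then have "y \<in> SR \<union> (\<Union>i\<in>J. A i)" using RU y by blast
          then show ?thesis
          proof
            assume "y \<in> SR" then show ?thesis by (auto simp: SR_def)
          next
            assume "y \<in> (\<Union>i\<in>J. A i)"
            then obtain i where "i \<in> J" "y \<in> N (xs!i)" by (auto simp: A_def)
            then show ?thesis using xin[OF Jk(1)] by blast
          qed
        qed
      next
        fix y assume "y \<in> Z \<union> (\<Union>v\<in>insert x X'. N v)"
        then show "y \<in> Y" using C(5) deg by blast
      qed
    qed
  qed
qed

end

context jk begin

lemma main:
  "finite X \<Longrightarrow> card X = n \<Longrightarrow> 2 \<le> n \<Longrightarrow> n \<le> \<delta> \<Longrightarrow> (\<forall>v\<in>X. N v \<subseteq> Y \<and> \<delta> \<le> card (N v))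
    \<Longrightarrow> hc X \<or> G2S X \<or> (\<delta> = n \<and> G1S X)"
proof (induction n arbitrary: X)
  case 0 then show ?case by simp
next
  case (Suc m)
  show ?case
  proof (cases "m = 1")
    case True
    then have "card X = 2" using Suc.prems(2) by simp
    then obtain u v where uv: "X = {u, v}" "u \<noteq> v" by (meson card_2_iff)
    have "hc {u, v} \<or> G2S {u, v}" using base[OF uv(2)] Suc.prems(5) uv(1) by auto
    then show ?thesis using uv by auto
  next
    case False
    then have m2: "2 \<le> m" using Suc.prems(3) by simp
    have "X \<noteq> {}" using Suc.prems(2) by auto
    then obtain x where x: "x \<in> X" by blast
    define X' where "X' = X - {x}"
    have fX': "finite X'" using Suc.prems(1) by (simp add: X'_def)
    have cX': "card X' = m" using Suc.prems(1,2) x by (simp add: X'_def)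
    have xX': "x \<notin> X'" by (simp add: X'_def)
    have XX: "X = insert x X'" using x by (auto simp: X'_def)
    have dX': "\<forall>v\<in>X'. N v \<subseteq> Y \<and> \<delta> \<le> card (N v)" using Suc.prems(5) by (auto simp: X'_def)
    have IH: "hc X' \<or> G2S X' \<or> (\<delta> = m \<and> G1S X')"
      using Suc.IH[OF fX' cX' m2 _ dX'] Suc.prems(4) by simp
    then have IH2: "hc X' \<or> G2S X'" using Suc.prems(4) by auto
    have dx: "N x \<subseteq> Y" "\<delta> \<le> card (N x)" using Suc.prems(5) x by auto
    show ?thesis
    proof (cases "hc X")
      case True then show ?thesis by simp
    next
      case nohc: False
      show ?thesis
      proof (cases "G2S X'")
        case True
        have "hc (insert x X') \<or> G2S (insert x X')"
          using G2ext[OF True xX' dx fX'] cX' Suc.prems(4) by simp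
        then show ?thesis using XX by blast
      next
        case False
        then have "hc X'" using IH2 by simp
        then obtain xs0 zs0 where c0: "cyc N xs0 zs0" "distinct xs0" "set xs0 = X'" "distinct zs0" "set zs0 \<subseteq> Y"
          unfolding hc_def by blast
        let ?P = "\<lambda>p. cyc N (fst p) (snd p) \<and> distinct (fst p) \<and> set (fst p) = X' \<and> distinct (snd p) \<and> set (snd p) \<subseteq> Y"
        have "?P (xs0, zs0)" using c0 by simp
        then obtain p where p: "?P p" and pmin: "\<forall>q. ?P q \<longrightarrow> card (N x \<inter> set (snd p)) \<le> card (N x \<inter> set (snd q))"
          using ex_has_least_nat[of ?P "(xs0, zs0)" "\<lambda>p. card (N x \<inter> set (snd p))"] by blast
        obtain xs zs where pz: "p = (xs, zs)" by (cases p)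
        have C: "cyc N xs zs" "distinct xs" "set xs = X'" "distinct zs" "set zs \<subseteq> Y" using p pz by auto
        have minC: "\<forall>xs' zs'. cyc N xs' zs' \<and> distinct xs' \<and> set xs' = X' \<and> distinct zs' \<and> set zs' \<subseteq> Y
           \<longrightarrow> card (N x \<inter> set zs) \<le> card (N x \<inter> set zs')"
          using pmin pz by (metis fst_conv snd_conv)
        have deg: "\<forall>v\<in>insert x X'. N v \<subseteq> Y \<and> \<delta> \<le> card (N v)" using Suc.prems(5) XX by simp
        have nohc': "\<not> hc (insert x X')" using nohc XX by simp
        interpret A: anl N Y \<delta> X' x xs zs m
          by (unfold_locales) (use fX' xX' cX' m2 Suc.prems(4) deg C minC nohc' finY cardY in auto)
        show ?thesis
        proof (cases "N x \<inter> set zs = {}")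
          case True then show ?thesis using A.case_s0 XX by blast
        next
          case False
          have h: "\<delta> = m + 1 \<and> G1S (insert x X')" by (rule A.case_s1[OF False])
          have h1: "\<delta> = Suc m" using conjunct1[OF h] by simp
          have h2: "G1S X" unfolding XX by (rule conjunct2[OF h])
          show ?thesis using h1 h2 by blast
        qed
      qed
    qed
  qed
qed

end

lemma iso_bip:
  assumes f: "bij_betw f (X \<union> Y) (X' \<union> Y')" "f ` X \<subseteq> X'" "f ` Y \<subseteq> Y'"
    and d: "X \<inter> Y = {}" "X' \<inter> Y' = {}"
    and E: "\<forall>e\<in>E. \<exists>x\<in>X. \<exists>y\<in>Y. e = {x,y}" and E': "\<forall>e\<in>E'. \<exists>x\<in>X'. \<exists>y\<in>Y'. e = {x,y}"
    and ed: "\<forall>x\<in>X. \<forall>y\<in>Y. {x,y} \<in> E \<longleftrightarrow> {f x, f y} \<in> E'"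
  shows "graph_iso (X \<union> Y) E (X' \<union> Y') E'"
  unfolding graph_iso_def
proof (rule exI[of _ f], rule conjI[OF f(1)], intro ballI)
  fix u v assume u: "u \<in> X \<union> Y" and v: "v \<in> X \<union> Y"
  have nXX: "{a, b} \<notin> E" if "a \<in> X" "b \<in> X" for a b
  proof
    assume "{a, b} \<in> E"
    then obtain x y where "x \<in> X" "y \<in> Y" "{a, b} = {x, y}" using E by blast
    then show False using that d(1) by (auto simp: doubleton_eq_iff)
  qed
  have nYY: "{a, b} \<notin> E" if "a \<in> Y" "b \<in> Y" for a b
  proof
    assume "{a, b} \<in> E"
    then obtain x y where "x \<in> X" "y \<in> Y" "{a, b} = {x, y}" using E by blast
    then show False using that d(1) by (auto simp: doubleton_eq_iff)
  qed
  have nXX': "{a, b} \<notin> E'" if "a \<in> X'" "b \<in> X'" for a b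
  proof
    assume "{a, b} \<in> E'"
    then obtain x y where "x \<in> X'" "y \<in> Y'" "{a, b} = {x, y}" using E' by blast
    then show False using that d(2) by (auto simp: doubleton_eq_iff)
  qed
  have nYY': "{a, b} \<notin> E'" if "a \<in> Y'" "b \<in> Y'" for a b
  proof
    assume "{a, b} \<in> E'"
    then obtain x y where "x \<in> X'" "y \<in> Y'" "{a, b} = {x, y}" using E' by blast
    then show False using that d(2) by (auto simp: doubleton_eq_iff)
  qed
  show "({u, v} \<in> E) = ({f u, f v} \<in> E')"
  proof (cases "u \<in> X")
    case uX: True
    show ?thesis
    proof (cases "v \<in> X")
      case True
      then have "f u \<in> X'" "f v \<in> X'" using uX f(2) by auto
      then show ?thesis using uX True nXX nXX' by blast
    next
      case False then have "v \<in> Y" using v by auto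
      then show ?thesis using uX ed by auto
    qed
  next
    case False
    then have uY: "u \<in> Y" using u by auto
    show ?thesis
    proof (cases "v \<in> X")
      case True then show ?thesis using uY ed by (auto simp: insert_commute)
    next
      case False then have "v \<in> Y" using v by auto
      then have "f u \<in> Y'" "f v \<in> Y'" using uY f(3) by auto
      then show ?thesis using uY \<open>v \<in> Y\<close> nYY nYY' by blast
    qed
  qed
qed

lemma bij_pair: "bij_betw g A I \<Longrightarrow> bij_betw (\<lambda>v. (c::nat, g v)) A (Pair c ` I)"
  unfolding bij_betw_def inj_on_def by auto

lemma G2E_01: "{(0::nat, i::nat), (1, j)} \<in> G2_E a b d \<longleftrightarrow> i < a \<and> j < d"
  unfolding G2_E_def by (auto simp: doubleton_eq_iff)
lemma G2E_03: "{(0::nat, i::nat), (3, j)} \<notin> G2_E a b d"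
  unfolding G2_E_def by (auto simp: doubleton_eq_iff)
lemma G2E_21: "{(2::nat, i::nat), (1, j)} \<in> G2_E a b d \<longleftrightarrow> i < b \<and> j = 0"
  unfolding G2_E_def by (auto simp: doubleton_eq_iff)
lemma G2E_23: "{(2::nat, i::nat), (3, j)} \<in> G2_E a b d \<longleftrightarrow> i < b \<and> 1 \<le> j \<and> j < d"
  unfolding G2_E_def by (auto simp: doubleton_eq_iff)
lemma G1E_01: "{(0::nat, i::nat), (1, j)} \<in> G1_E d \<longleftrightarrow> i < d \<and> j < d - 1"
  unfolding G1_E_def by (auto simp: doubleton_eq_iff)
lemma G1E_02: "{(0::nat, i::nat), (2, j)} \<in> G1_E d \<longleftrightarrow> i = j \<and> i < d"
  unfolding G1_E_def by (auto simp: doubleton_eq_iff)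

lemma bip_N:
  assumes bg: "bipartite_graph X Y E" and v: "v \<in> X"
  shows "{u. {v,u} \<in> E} \<subseteq> Y"
proof
  fix u assume "u \<in> {u. {v,u} \<in> E}"
  then have "{v,u} \<in> E" by simp
  then obtain a b where ab: "a \<in> X" "b \<in> Y" "{v,u} = {a,b}" using bg unfolding bipartite_graph_def by blast
  have XY: "X \<inter> Y = {}" using bg unfolding bipartite_graph_def by blast
  from ab(3) have "(v = a \<and> u = b) \<or> (v = b \<and> u = a)" by (simp add: doubleton_eq_iff)
  then show "u \<in> Y" using ab v XY by blast
qed

lemmas G2E_s = G2E_01 G2E_03 G2E_21 G2E_23 G2E_01[unfolded One_nat_def]
  G2E_21[unfolded One_nat_def] G2E_23[unfolded One_nat_def]

lemma G2iso:
  assumes bg: "bipartite_graph X Y E"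
    and G: "X = A \<union> B" "A \<inter> B = {}" "Y = insert y0 (P \<union> Q)" "y0 \<notin> P" "y0 \<notin> Q" "P \<inter> Q = {}"
      "card P = d - 1" "card Q = d - 1" "\<forall>a\<in>A. {u. {a,u} \<in> E} = insert y0 P"
      "\<forall>b\<in>B. {u. {b,u} \<in> E} = insert y0 Q" "1 \<le> d"
  shows "graph_iso (X \<union> Y) E (G2_X (card A) (card B) \<union> G2_Y d) (G2_E (card A) (card B) d)"
proof -
  have fin: "finite X" "finite Y" "X \<inter> Y = {}" and Ed: "\<forall>e\<in>E. \<exists>x\<in>X. \<exists>y\<in>Y. e = {x, y}"
    using bg unfolding bipartite_graph_def by auto
  have fA: "finite A" "finite B" "finite P" "finite Q" using fin G by auto
  obtain gA where gA: "bij_betw gA A {..<card A}" using finite_same_card_bij[OF fA(1), of "{..<card A}"] by auto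
  obtain gB where gB: "bij_betw gB B {..<card B}" using finite_same_card_bij[OF fA(2), of "{..<card B}"] by auto
  obtain gP where gP: "bij_betw gP P {1..<d}" using finite_same_card_bij[OF fA(3), of "{1..<d}"] G by auto
  obtain gQ where gQ: "bij_betw gQ Q {1..<d}" using finite_same_card_bij[OF fA(4), of "{1..<d}"] G by auto
  define f where "f v = (if v \<in> A then (0::nat, gA v) else if v \<in> B then (2, gB v) else if v = y0 then (1, 0)
     else if v \<in> P then (1, gP v) else (3, gQ v))" for v
  have dis: "y0 \<notin> A" "y0 \<notin> B" "P \<inter> A = {}" "P \<inter> B = {}" "Q \<inter> A = {}" "Q \<inter> B = {}"
    using fin(3) G by auto
  have fA': "\<And>v. v \<in> A \<Longrightarrow> f v = (0, gA v)" by (simp add: f_def)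
  have fB': "\<And>v. v \<in> B \<Longrightarrow> f v = (2, gB v)" using G(2) by (auto simp: f_def)
  have fy: "f y0 = (1, 0)" using dis by (simp add: f_def)
  have fP: "\<And>v. v \<in> P \<Longrightarrow> f v = (1, gP v)" using dis G by (auto simp: f_def)
  have fQ: "\<And>v. v \<in> Q \<Longrightarrow> f v = (3, gQ v)" using dis G by (auto simp: f_def)
  have b1: "bij_betw f A (Pair 0 ` {..<card A})"
    using bij_betw_cong[of A f "\<lambda>v. (0, gA v)"] fA' bij_pair[OF gA] by simp
  have b2: "bij_betw f B (Pair 2 ` {..<card B})"
    using bij_betw_cong[of B f "\<lambda>v. (2, gB v)"] fB' bij_pair[OF gB] by simp
  have b3: "bij_betw f {y0} {(1, 0)}" using fy by (simp add: bij_betw_def)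
  have b4: "bij_betw f P (Pair 1 ` {1..<d})"
    using bij_betw_cong[of P f "\<lambda>v. (1, gP v)"] fP bij_pair[OF gP] by simp
  have b5: "bij_betw f Q (Pair 3 ` {1..<d})"
    using bij_betw_cong[of Q f "\<lambda>v. (3, gQ v)"] fQ bij_pair[OF gQ] by simp
  have b12: "bij_betw f (A \<union> B) (Pair 0 ` {..<card A} \<union> Pair 2 ` {..<card B})"
    by (rule bij_betw_combine[OF b1 b2]) auto
  have b123: "bij_betw f ((A \<union> B) \<union> {y0}) ((Pair 0 ` {..<card A} \<union> Pair 2 ` {..<card B}) \<union> {(1,0)})"
    by (rule bij_betw_combine[OF b12 b3]) auto
  have b1234: "bij_betw f (((A \<union> B) \<union> {y0}) \<union> P) (((Pair 0 ` {..<card A} \<union> Pair 2 ` {..<card B}) \<union> {(1,0)}) \<union> Pair 1 ` {1..<d})"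
    by (rule bij_betw_combine[OF b123 b4]) auto
  have b12345: "bij_betw f ((((A \<union> B) \<union> {y0}) \<union> P) \<union> Q) ((((Pair 0 ` {..<card A} \<union> Pair 2 ` {..<card B}) \<union> {(1,0)}) \<union> Pair 1 ` {1..<d}) \<union> Pair 3 ` {1..<d})"
    by (rule bij_betw_combine[OF b1234 b5]) auto
  have dom: "(((A \<union> B) \<union> {y0}) \<union> P) \<union> Q = X \<union> Y" using G by auto
  have X2: "G2_X (card A) (card B) = Pair 0 ` {..<card A} \<union> Pair 2 ` {..<card B}"
    unfolding G2_X_def by auto
  have Y2: "G2_Y d = ({(1,0)} \<union> Pair 1 ` {1..<d}) \<union> Pair 3 ` {1..<d}"
    unfolding G2_Y_def using G(11) by (auto simp: image_def)
  have cod: "(((Pair 0 ` {..<card A} \<union> Pair 2 ` {..<card B}) \<union> {(1,0)}) \<union> Pair 1 ` {1..<d}) \<union> Pair 3 ` {1..<d}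
      = G2_X (card A) (card B) \<union> G2_Y d" using X2 Y2 by auto
  have bij: "bij_betw f (X \<union> Y) (G2_X (card A) (card B) \<union> G2_Y d)" using b12345 dom cod by simp
  have fX: "f ` X \<subseteq> G2_X (card A) (card B)"
    using G(1) bij_betw_imp_surj_on[OF b1] bij_betw_imp_surj_on[OF b2] X2 by (simp add: image_Un)
  have fY: "f ` Y \<subseteq> G2_Y d"
    using G(3) bij_betw_imp_surj_on[OF b3] bij_betw_imp_surj_on[OF b4] bij_betw_imp_surj_on[OF b5] Y2
    by (auto simp: image_Un)
  have d2: "G2_X (card A) (card B) \<inter> G2_Y d = {}" unfolding G2_X_def G2_Y_def by auto
  have E2: "\<forall>e\<in>G2_E (card A) (card B) d. \<exists>x\<in>G2_X (card A) (card B). \<exists>y\<in>G2_Y d. e = {x, y}"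
  proof
    fix e assume "e \<in> G2_E (card A) (card B) d"
    then consider (a) i j where "e = {(0,i),(1,j)}" "i < card A" "j < d"
      | (b) i where "e = {(2,i),(1,0)}" "i < card B"
      | (c) i j where "e = {(2,i),(3,j)}" "i < card B" "1 \<le> j" "j < d"
      unfolding G2_E_def by blast
    then show "\<exists>x\<in>G2_X (card A) (card B). \<exists>y\<in>G2_Y d. e = {x, y}"
    proof cases
      case a then show ?thesis unfolding G2_X_def G2_Y_def by blast
    next
      case b
      have "(1::nat, 0::nat) \<in> G2_Y d" using G(11) unfolding G2_Y_def by auto
      moreover have "(2::nat, i) \<in> G2_X (card A) (card B)" using b unfolding G2_X_def by auto
      ultimately show ?thesis using b by blast
    next
      case c then show ?thesis unfolding G2_X_def G2_Y_def by blast
    qed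
  qed
  have ed: "\<forall>x\<in>X. \<forall>y\<in>Y. {x,y} \<in> E \<longleftrightarrow> {f x, f y} \<in> G2_E (card A) (card B) d"
  proof (intro ballI)
    fix v y assume v: "v \<in> X" and y: "y \<in> Y"
    have iff: "{v,y} \<in> E \<longleftrightarrow> y \<in> {u. {v,u} \<in> E}" by simp
    show "{v,y} \<in> E \<longleftrightarrow> {f v, f y} \<in> G2_E (card A) (card B) d"
    proof (cases "v \<in> A")
      case vA: True
      have ga: "gA v < card A" using gA vA by (auto simp: bij_betw_def)
      have Nv: "y \<in> {u. {v,u} \<in> E} \<longleftrightarrow> y = y0 \<or> y \<in> P" using G(9) vA by auto
      consider "y = y0" | "y \<in> P" | "y \<in> Q" using y G(3) by auto
      then show ?thesis
      proof cases
        case 1 then show ?thesis using iff Nv fA'[OF vA] fy ga G(11) by (simp add: G2E_s)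
      next
        case 2
        have "gP y \<in> {1..<d}" using gP 2 by (auto simp: bij_betw_def)
        then show ?thesis using 2 iff Nv fA'[OF vA] fP ga by (simp add: G2E_s)
      next
        case 3
        have "y \<noteq> y0" "y \<notin> P" using 3 G by auto
        then show ?thesis using 3 iff Nv fA'[OF vA] fQ by (simp add: G2E_s)
      qed
    next
      case False
      then have vB: "v \<in> B" using v G(1) by auto
      have gb: "gB v < card B" using gB vB by (auto simp: bij_betw_def)
      have Nv: "y \<in> {u. {v,u} \<in> E} \<longleftrightarrow> y = y0 \<or> y \<in> Q" using G(10) vB by auto
      consider "y = y0" | "y \<in> P" | "y \<in> Q" using y G(3) by auto
      then show ?thesis
      proof cases
        case 1 then show ?thesis using iff Nv fB'[OF vB] fy gb by (simp add: G2E_s)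
      next
        case 2
        have "gP y \<in> {1..<d}" using gP 2 by (auto simp: bij_betw_def)
        moreover have "y \<noteq> y0" "y \<notin> Q" using 2 G by auto
        ultimately show ?thesis using 2 iff Nv fB'[OF vB] fP by (simp add: G2E_s)
      next
        case 3
        have "gQ y \<in> {1..<d}" using gQ 3 by (auto simp: bij_betw_def)
        then show ?thesis using 3 iff Nv fB'[OF vB] fQ gb by (simp add: G2E_s)
      qed
    qed
  qed
  show ?thesis by (rule iso_bip[OF bij fX fY fin(3) d2 Ed E2 ed])
qed

lemmas G1E_s = G1E_01 G1E_02 G1E_01[unfolded One_nat_def]

lemma G1iso:
  assumes bg: "bipartite_graph X Y E" and cX: "card X = d"
    and G: "Y0 \<subseteq> Y" "card Y0 = d - 1"
      "\<forall>v\<in>X. Y0 \<subseteq> {u. {v,u} \<in> E} \<and> card ({u. {v,u} \<in> E} - Y0) = 1"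
      "\<forall>v\<in>X. \<forall>w\<in>X. v \<noteq> w \<longrightarrow> ({u. {v,u} \<in> E} - Y0) \<inter> ({u. {w,u} \<in> E} - Y0) = {}"
      "Y = Y0 \<union> (\<Union>v\<in>X. {u. {v,u} \<in> E})"
  shows "graph_iso (X \<union> Y) E (G1_X d \<union> G1_Y d) (G1_E d)"
proof -
  define N where "N v = {u. {v,u} \<in> E}" for v
  have fin: "finite X" "finite Y" "X \<inter> Y = {}" and Ed: "\<forall>e\<in>E. \<exists>x\<in>X. \<exists>y\<in>Y. e = {x, y}"
    using bg unfolding bipartite_graph_def by auto
  have NY: "N v \<subseteq> Y" if "v \<in> X" for v using bip_N[OF bg that] by (simp add: N_def)
  define p where "p v = the_elem (N v - Y0)" for v
  have pv: "N v - Y0 = {p v}" if v: "v \<in> X" for v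
  proof -
    have "card (N v - Y0) = 1" using G(3) v by (simp add: N_def)
    then obtain a where "N v - Y0 = {a}" by (auto simp: card_1_singleton_iff)
    then show ?thesis by (simp add: p_def)
  qed
  have injp: "inj_on p X"
  proof (rule inj_onI)
    fix v w assume v: "v \<in> X" and w: "w \<in> X" and e: "p v = p w"
    show "v = w"
    proof (rule ccontr)
      assume "v \<noteq> w"
      then have "(N v - Y0) \<inter> (N w - Y0) = {}" using G(4) v w by (simp add: N_def)
      then show False using pv[OF v] pv[OF w] e by auto
    qed
  qed
  have imp: "p ` X = Y - Y0"
  proof (intro equalityI subsetI)
    fix y assume "y \<in> p ` X"
    then obtain v where v: "v \<in> X" "y = p v" by auto
    then show "y \<in> Y - Y0" using pv[OF v(1)] NY[OF v(1)] by auto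
  next
    fix y assume y: "y \<in> Y - Y0"
    then obtain v where v: "v \<in> X" "y \<in> N v" using G(5) by (auto simp: N_def)
    then have "y \<in> N v - Y0" using y by auto
    then show "y \<in> p ` X" using pv[OF v(1)] v(1) by auto
  qed
  have bp: "bij_betw p X (Y - Y0)" using injp imp by (simp add: bij_betw_def)
  define q where "q = inv_into X p"
  have bq: "bij_betw q (Y - Y0) X" unfolding q_def by (rule bij_betw_inv_into[OF bp])
  have qp: "\<And>y. y \<in> Y - Y0 \<Longrightarrow> p (q y) = y" unfolding q_def using imp by (simp add: f_inv_into_f)
  have qX: "\<And>y. y \<in> Y - Y0 \<Longrightarrow> q y \<in> X" using bq by (auto simp: bij_betw_def)
  have fY0: "finite Y0" using G(1) fin finite_subset by auto
  obtain gX where gX: "bij_betw gX X {..<d}" using finite_same_card_bij[OF fin(1), of "{..<d}"] cX by auto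
  obtain gY where gY: "bij_betw gY Y0 {..<d - 1}" using finite_same_card_bij[OF fY0, of "{..<d - 1}"] G(2) by auto
  define f where "f v = (if v \<in> X then (0::nat, gX v) else if v \<in> Y0 then (1, gY v) else (2, gX (q v)))" for v
  have fX': "\<And>v. v \<in> X \<Longrightarrow> f v = (0, gX v)" by (simp add: f_def)
  have fY0': "\<And>v. v \<in> Y0 \<Longrightarrow> f v = (1, gY v)" using fin(3) G(1) by (auto simp: f_def)
  have fR': "\<And>v. v \<in> Y - Y0 \<Longrightarrow> f v = (2, gX (q v))" using fin(3) by (auto simp: f_def)
  have b1: "bij_betw f X (Pair 0 ` {..<d})"
    using bij_betw_cong[of X f "\<lambda>v. (0, gX v)"] fX' bij_pair[OF gX] by simp
  have b2: "bij_betw f Y0 (Pair 1 ` {..<d - 1})"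
    using bij_betw_cong[of Y0 f "\<lambda>v. (1, gY v)"] fY0' bij_pair[OF gY] by simp
  have gq: "bij_betw (gX \<circ> q) (Y - Y0) {..<d}" by (rule bij_betw_trans[OF bq gX])
  have b3: "bij_betw f (Y - Y0) (Pair 2 ` {..<d})"
    using bij_betw_cong[of "Y - Y0" f "\<lambda>v. (2, (gX \<circ> q) v)"] fR' bij_pair[OF gq] by simp
  have b12: "bij_betw f (X \<union> Y0) (Pair 0 ` {..<d} \<union> Pair 1 ` {..<d - 1})"
    by (rule bij_betw_combine[OF b1 b2]) auto
  have b123: "bij_betw f ((X \<union> Y0) \<union> (Y - Y0)) ((Pair 0 ` {..<d} \<union> Pair 1 ` {..<d - 1}) \<union> Pair 2 ` {..<d})"
    by (rule bij_betw_combine[OF b12 b3]) auto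
  have dom: "(X \<union> Y0) \<union> (Y - Y0) = X \<union> Y" using G(1) by auto
  have X1: "G1_X d = Pair 0 ` {..<d}" unfolding G1_X_def by auto
  have Y1: "G1_Y d = Pair 1 ` {..<d - 1} \<union> Pair 2 ` {..<d}" unfolding G1_Y_def by auto
  have cod: "(Pair 0 ` {..<d} \<union> Pair 1 ` {..<d - 1}) \<union> Pair 2 ` {..<d} = G1_X d \<union> G1_Y d"
    using X1 Y1 by auto
  have bij: "bij_betw f (X \<union> Y) (G1_X d \<union> G1_Y d)" using b123 dom cod by simp
  have fXs: "f ` X \<subseteq> G1_X d" using bij_betw_imp_surj_on[OF b1] X1 by simp
  have fYs: "f ` Y \<subseteq> G1_Y d"
  proof -
    have "Y = Y0 \<union> (Y - Y0)" using G(1) by auto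
    then have "f ` Y = f ` Y0 \<union> f ` (Y - Y0)" by (metis image_Un)
    then show ?thesis using bij_betw_imp_surj_on[OF b2] bij_betw_imp_surj_on[OF b3] Y1 by simp
  qed
  have d1: "G1_X d \<inter> G1_Y d = {}" unfolding G1_X_def G1_Y_def by auto
  have E1: "\<forall>e\<in>G1_E d. \<exists>x\<in>G1_X d. \<exists>y\<in>G1_Y d. e = {x, y}"
  proof
    fix e assume "e \<in> G1_E d"
    then consider (a) i j where "e = {(0,i),(1,j)}" "i < d" "j < d - 1"
      | (b) i where "e = {(0,i),(2,i)}" "i < d"
      unfolding G1_E_def by blast
    then show "\<exists>x\<in>G1_X d. \<exists>y\<in>G1_Y d. e = {x, y}"
    proof cases
      case a then show ?thesis unfolding G1_X_def G1_Y_def by blast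
    next
      case b then show ?thesis unfolding G1_X_def G1_Y_def by blast
    qed
  qed
  have ed: "\<forall>x\<in>X. \<forall>y\<in>Y. {x,y} \<in> E \<longleftrightarrow> {f x, f y} \<in> G1_E d"
  proof (intro ballI)
    fix v y assume v: "v \<in> X" and y: "y \<in> Y"
    have iff: "{v,y} \<in> E \<longleftrightarrow> y \<in> N v" by (simp add: N_def)
    have gv: "gX v < d" using gX v by (auto simp: bij_betw_def)
    show "{v,y} \<in> E \<longleftrightarrow> {f v, f y} \<in> G1_E d"
    proof (cases "y \<in> Y0")
      case True
      have "y \<in> N v" using True G(3) v by (auto simp: N_def)
      moreover have "gY y < d - 1" using gY True by (auto simp: bij_betw_def)
      ultimately show ?thesis using iff fX'[OF v] fY0'[OF True] gv by (simp add: G1E_s)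
    next
      case False
      then have yR: "y \<in> Y - Y0" using y by simp
      have "y \<in> N v \<longleftrightarrow> y = p v" using pv[OF v] False by auto
      also have "\<dots> \<longleftrightarrow> q y = v"
        using qp[OF yR] qX[OF yR] v injp by (metis inj_on_eq_iff)
      also have "\<dots> \<longleftrightarrow> gX v = gX (q y)"
        using gX qX[OF yR] v by (metis bij_betw_def inj_on_eq_iff)
      finally have "y \<in> N v \<longleftrightarrow> gX v = gX (q y)" .
      then show ?thesis using iff fX'[OF v] fR'[OF yR] gv by (simp add: G1E_s)
    qed
  qed
  show ?thesis by (rule iso_bip[OF bij fXs fYs fin(3) d1 Ed E1 ed])
qed

theorem theorem3:
  fixes X Y :: "'a set" and E :: "'a set set" and n m \<delta> :: nat
  assumes "n \<ge> 2" and "\<delta> \<ge> n" and "m \<le> 2 * \<delta> - 1"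
    and "bipartite_graph X Y E" and "card X = n" and "card Y = m"
    and "\<forall>x\<in>X. degree E x \<ge> \<delta>"
    and "\<not> has_cycle_of_length (X \<union> Y) E (2 * n)"
  shows "(\<delta> = n \<and> graph_iso (X \<union> Y) E (G1_X \<delta> \<union> G1_Y \<delta>) (G1_E \<delta>))
       \<or> (\<exists>a b. 0 < b \<and> b \<le> a \<and> a + b = n \<and>
            graph_iso (X \<union> Y) E (G2_X a b \<union> G2_Y \<delta>) (G2_E a b \<delta>))"
proof -
  define N where "N v = {u. {v,u} \<in> E}" for v
  have bg: "bipartite_graph X Y E" by (rule assms(4))
  have fin: "finite X" "finite Y" "X \<inter> Y = {}" using bg unfolding bipartite_graph_def by auto
  have cY: "card Y + 1 \<le> 2 * \<delta>" using assms(1,2,3,6) by linarith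
  interpret J: jk N Y \<delta> by unfold_locales (use fin cY in auto)
  have deg: "\<forall>v\<in>X. N v \<subseteq> Y \<and> \<delta> \<le> card (N v)"
    using bip_N[OF bg] assms(7) by (auto simp: N_def degree_def)
  have M: "J.hc X \<or> J.G2S X \<or> (\<delta> = n \<and> J.G1S X)"
    using J.main[OF fin(1) assms(5) assms(1) assms(2) deg] .
  have nhc: "\<not> J.hc X"
  proof
    assume "J.hc X"
    then obtain xs zs where c: "cyc N xs zs" "distinct xs" "set xs = X" "distinct zs" "set zs \<subseteq> Y"
      unfolding J.hc_def by blast
    have Nd: "N = (\<lambda>v. {u. {v,u} \<in> E})" by (rule ext) (simp add: N_def)
    have "has_cycle_of_length (X \<union> Y) E (2 * length xs)"
      using cyc_to_hcl[of E xs zs "X \<union> Y"] c fin(3) Nd by auto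
    moreover have "length xs = n" using c assms(5) distinct_card by metis
    ultimately show False using assms(8) by simp
  qed
  show ?thesis
  proof (cases "J.G2S X")
    case True
    then obtain A B y0 P Q where G: "X = A \<union> B" "A \<inter> B = {}" "A \<noteq> {}" "B \<noteq> {}"
       "Y = insert y0 (P \<union> Q)" "y0 \<notin> P" "y0 \<notin> Q" "P \<inter> Q = {}"
       "card P = \<delta> - 1" "card Q = \<delta> - 1" "\<forall>a\<in>A. N a = insert y0 P" "\<forall>b\<in>B. N b = insert y0 Q"
      unfolding J.G2S_def by blast
    have fAB: "finite A" "finite B" using G(1) fin(1) by auto
    have cAB: "card A + card B = n" using G(1,2) fAB assms(5) by (simp add: card_Un_disjoint)
    have pos: "0 < card A" "0 < card B" using G(3,4) fAB by (auto simp: card_gt_0_iff)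
    have d1: "1 \<le> \<delta>" using assms(1,2) by simp
    have GA: "\<forall>a\<in>A. {u. {a,u} \<in> E} = insert y0 P" "\<forall>b\<in>B. {u. {b,u} \<in> E} = insert y0 Q"
      using G(11,12) by (auto simp: N_def)
    show ?thesis
    proof (cases "card B \<le> card A")
      case True
      have "graph_iso (X \<union> Y) E (G2_X (card A) (card B) \<union> G2_Y \<delta>) (G2_E (card A) (card B) \<delta>)"
        by (rule G2iso[OF bg G(1,2,5,6,7,8,9,10) GA d1])
      then show ?thesis using True pos cAB by blast
    next
      case False
      have G': "X = B \<union> A" "B \<inter> A = {}" "Y = insert y0 (Q \<union> P)" "Q \<inter> P = {}"
        using G by auto
      have "graph_iso (X \<union> Y) E (G2_X (card B) (card A) \<union> G2_Y \<delta>) (G2_E (card B) (card A) \<delta>)"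
        by (rule G2iso[OF bg G'(1,2,3) G(7,6) G'(4) G(10,9) GA(2,1) d1])
      then show ?thesis using False pos cAB by (intro disjI2 exI[of _ "card B"] exI[of _ "card A"]) auto
    qed
  next
    case False
    then have G1: "\<delta> = n" "J.G1S X" using M nhc by auto
    then obtain Y0 where Y0: "Y0 \<subseteq> Y" "card Y0 = \<delta> - 1"
      "\<forall>v\<in>X. Y0 \<subseteq> N v \<and> card (N v - Y0) = 1"
      "\<forall>v\<in>X. \<forall>w\<in>X. v \<noteq> w \<longrightarrow> (N v - Y0) \<inter> (N w - Y0) = {}"
      "Y = Y0 \<union> (\<Union>v\<in>X. N v)"
      unfolding J.G1S_def by blast
    have cX: "card X = \<delta>" using G1(1) assms(5) by simp
    have "graph_iso (X \<union> Y) E (G1_X \<delta> \<union> G1_Y \<delta>) (G1_E \<delta>)"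
      by (rule G1iso[OF bg cX Y0(1,2)]) (use Y0(3,4,5) in \<open>simp_all add: N_def\<close>)
    then show ?thesis using G1(1) by blast
  qed
qed

end
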